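(* Let $M\ge1$, $J_M=\begin{pmatrix}0&I_M\\-I_M&0\end{pmatrix}$. Let $A'$ be the unital $*$-subalgebra of $\mathrm{Pol}(U_{2M}^+)$ generated by the products $u_{jk}^*u_{\ell m}$, $1\le j,k,\ell,m\le 2M$, and $B'$ the unital $*$-subalgebra of $\mathrm{Pol}(O_{J_M}^+)$ generated by the products $u_{jk}^*u_{\ell m}$, $1\le j,k,\ell,m\le 2M$. Then there is a unique CQG algebra isomorphism $A'\to B'$ with $u_{jk}^*u_{\ell m}\mapsto u_{jk}^*u_{\ell m}$ for all $j,k,\ell,m$.
   Context: $\mathrm{Pol}(U_{2M}^+)$ is the universal unital $*$-algebra generated by $u_{jk}$, $1\le j,k\le 2M$, such that $U=(u_{jk})$ and $\overline{U}=(u_{jk}^* )$ are unitary. $\mathrm{Pol}(O_{J_M}^+)$ is the universal unital $*$-algebra generated by $u_{jk}$, $1\le j,k\le 2M$, such that $U=(u_{jk})$ is unitary and $U=J_M\overline{U}J_M^{-1}$. Both are CQG algebras (Hopf $*$-algebras) with $\Delta(u_{jk})=\sum_\ell u_{j\ell}\otimes u_{\ell k}$, and $A'$, $B'$ are Hopf $*$-subalgebras. *)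

theory Defs
  imports Complex_Main
begin

text \<open>
  Letters: (j,k,False) stands for u_jk, (j,k,True) for u_jk^*.
  The free unital *-algebra on the letters with 1 <= j,k <= 2M is modelled as the
  finitely supported complex-valued functions on words; the universal algebras are
  quotients by the two-sided *-ideal generated by the defining relations, and
  elements of the quotient are equivalence classes (sets of representatives).
\<close>

type_synonym letter = "nat \<times> nat \<times> bool"
type_synonym word = "letter list"
type_synonym el = "word \<Rightarrow> complex"
type_synonym tel = "word \<times> word \<Rightarrow> complex"

definition letters :: "nat \<Rightarrow> letter set" where
  "letters M = {(j,k,b). 1 \<le> j \<and> j \<le> 2*M \<and> 1 \<le> k \<and> k \<le> 2*M}"

definition Fr :: "nat \<Rightarrow> el set" where
  "Fr M = {f. finite {w. f w \<noteq> 0} \<and> (\<forall>w. f w \<noteq> 0 \<longrightarrow> set w \<subseteq> letters M)}"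

definition fzero :: el where "fzero = (\<lambda>w. 0)"
definition fone :: el where "fone = (\<lambda>w. if w = [] then 1 else 0)"
definition fgen :: "letter \<Rightarrow> el" where "fgen x = (\<lambda>w. if w = [x] then 1 else 0)"
definition fadd :: "el \<Rightarrow> el \<Rightarrow> el" where "fadd f g = (\<lambda>w. f w + g w)"
definition fsub :: "el \<Rightarrow> el \<Rightarrow> el" where "fsub f g = (\<lambda>w. f w - g w)"
definition fscale :: "complex \<Rightarrow> el \<Rightarrow> el" where "fscale c f = (\<lambda>w. c * f w)"
definition fmul :: "el \<Rightarrow> el \<Rightarrow> el" where
  "fmul f g = (\<lambda>w. \<Sum>i\<le>length w. f (take i w) * g (drop i w))"
definition flipl :: "letter \<Rightarrow> letter" where "flipl x = (case x of (j,k,b) \<Rightarrow> (j,k,\<not> b))"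
definition fstar :: "el \<Rightarrow> el" where "fstar f = (\<lambda>w. cnj (f (rev (map flipl w))))"
definition fsumset :: "'i set \<Rightarrow> ('i \<Rightarrow> el) \<Rightarrow> el" where
  "fsumset S F = (\<lambda>w. \<Sum>i\<in>S. F i w)"

definition u :: "nat \<Rightarrow> nat \<Rightarrow> el" where "u j k = fgen (j,k,False)"
definition us :: "nat \<Rightarrow> nat \<Rightarrow> el" where "us j k = fgen (j,k,True)"

definition delta :: "nat \<Rightarrow> nat \<Rightarrow> complex" where "delta j k = (if j = k then 1 else 0)"

text \<open>J_M = [[0, I_M], [-I_M, 0]] with indices 1..2M, and its inverse (= transpose).\<close>
definition Jm :: "nat \<Rightarrow> nat \<Rightarrow> nat \<Rightarrow> complex" where
  "Jm M a b = (if 1 \<le> a \<and> a \<le> M \<and> b = a + M then 1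
               else if M < a \<and> a \<le> 2*M \<and> a = b + M then -1 else 0)"
definition Jinv :: "nat \<Rightarrow> nat \<Rightarrow> nat \<Rightarrow> complex" where
  "Jinv M a b = Jm M b a"

definition idx :: "nat \<Rightarrow> nat set" where "idx M = {1..2*M}"

text \<open>Relations: U U^* = 1, U^* U = 1 (entrywise).\<close>
definition relUnitary :: "nat \<Rightarrow> el set" where
  "relUnitary M =
     {fsub (fsumset (idx M) (\<lambda>l. fmul (u j l) (us k l))) (fscale (delta j k) fone) | j k. j \<in> idx M \<and> k \<in> idx M}
   \<union> {fsub (fsumset (idx M) (\<lambda>l. fmul (us l j) (u l k))) (fscale (delta j k) fone) | j k. j \<in> idx M \<and> k \<in> idx M}"

text \<open>Relations: Ubar Ubar^* = 1, Ubar^* Ubar = 1 where Ubar = (u_jk^*).\<close>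
definition relUbarUnitary :: "nat \<Rightarrow> el set" where
  "relUbarUnitary M =
     {fsub (fsumset (idx M) (\<lambda>l. fmul (us j l) (u k l))) (fscale (delta j k) fone) | j k. j \<in> idx M \<and> k \<in> idx M}
   \<union> {fsub (fsumset (idx M) (\<lambda>l. fmul (u l j) (us l k))) (fscale (delta j k) fone) | j k. j \<in> idx M \<and> k \<in> idx M}"

text \<open>Relations: U = J Ubar J^{-1}.\<close>
definition relJ :: "nat \<Rightarrow> el set" where
  "relJ M = {fsub (u j k) (fsumset (idx M \<times> idx M) (\<lambda>(a,b). fscale (Jm M j a * Jinv M b k) (us a b)))
             | j k. j \<in> idx M \<and> k \<in> idx M}"

definition relU :: "nat \<Rightarrow> el set" where "relU M = relUnitary M \<union> relUbarUnitary M"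
definition relO :: "nat \<Rightarrow> el set" where "relO M = relUnitary M \<union> relJ M"

inductive_set starIdeal :: "nat \<Rightarrow> el set \<Rightarrow> el set" for M R where
  gen: "r \<in> R \<Longrightarrow> r \<in> starIdeal M R"
| zero: "fzero \<in> starIdeal M R"
| add: "a \<in> starIdeal M R \<Longrightarrow> b \<in> starIdeal M R \<Longrightarrow> fadd a b \<in> starIdeal M R"
| scale: "a \<in> starIdeal M R \<Longrightarrow> fscale c a \<in> starIdeal M R"
| lmul: "x \<in> Fr M \<Longrightarrow> a \<in> starIdeal M R \<Longrightarrow> fmul x a \<in> starIdeal M R"
| rmul: "a \<in> starIdeal M R \<Longrightarrow> x \<in> Fr M \<Longrightarrow> fmul a x \<in> starIdeal M R"
| star: "a \<in> starIdeal M R \<Longrightarrow> fstar a \<in> starIdeal M R"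

definition IU :: "nat \<Rightarrow> el set" where "IU M = starIdeal M (relU M)"
definition IO :: "nat \<Rightarrow> el set" where "IO M = starIdeal M (relO M)"

definition cls :: "nat \<Rightarrow> el set \<Rightarrow> el \<Rightarrow> el set" where
  "cls M I p = {q \<in> Fr M. fsub p q \<in> I}"

definition Pol :: "nat \<Rightarrow> el set \<Rightarrow> el set set" where "Pol M I = cls M I ` Fr M"

definition qone :: "nat \<Rightarrow> el set \<Rightarrow> el set" where "qone M I = cls M I fone"
definition qadd :: "nat \<Rightarrow> el set \<Rightarrow> el set \<Rightarrow> el set \<Rightarrow> el set" where
  "qadd M I X Y = (\<Union>p\<in>X. \<Union>q\<in>Y. cls M I (fadd p q))"
definition qscale :: "nat \<Rightarrow> el set \<Rightarrow> complex \<Rightarrow> el set \<Rightarrow> el set" where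
  "qscale M I c X = (\<Union>p\<in>X. cls M I (fscale c p))"
definition qmul :: "nat \<Rightarrow> el set \<Rightarrow> el set \<Rightarrow> el set \<Rightarrow> el set" where
  "qmul M I X Y = (\<Union>p\<in>X. \<Union>q\<in>Y. cls M I (fmul p q))"
definition qstar :: "nat \<Rightarrow> el set \<Rightarrow> el set \<Rightarrow> el set" where
  "qstar M I X = (\<Union>p\<in>X. cls M I (fstar p))"

inductive_set subalgS :: "nat \<Rightarrow> el set \<Rightarrow> el set set" for M I where
  one: "qone M I \<in> subalgS M I"
| gen: "j \<in> idx M \<Longrightarrow> k \<in> idx M \<Longrightarrow> l \<in> idx M \<Longrightarrow> m \<in> idx M \<Longrightarrow>
        cls M I (fmul (us j k) (u l m)) \<in> subalgS M I"
| add: "X \<in> subalgS M I \<Longrightarrow> Y \<in> subalgS M I \<Longrightarrow> qadd M I X Y \<in> subalgS M I"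
| scale: "X \<in> subalgS M I \<Longrightarrow> qscale M I c X \<in> subalgS M I"
| mul: "X \<in> subalgS M I \<Longrightarrow> Y \<in> subalgS M I \<Longrightarrow> qmul M I X Y \<in> subalgS M I"
| star: "X \<in> subalgS M I \<Longrightarrow> qstar M I X \<in> subalgS M I"

definition A' :: "nat \<Rightarrow> el set set" where "A' M = subalgS M (IU M)"
definition B' :: "nat \<Rightarrow> el set set" where "B' M = subalgS M (IO M)"

text \<open>Algebraic tensor square Fr M \<otimes> Fr M, modelled as finitely supported functions
  on pairs of words; (Fr M / I) \<otimes> (Fr M / I) = (Fr M \<otimes> Fr M)/(I \<otimes> Fr M + Fr M \<otimes> I).\<close>
definition FF :: "nat \<Rightarrow> tel set" where
  "FF M = {t. finite {vw. t vw \<noteq> 0} \<and>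
              (\<forall>v w. t (v,w) \<noteq> 0 \<longrightarrow> set v \<subseteq> letters M \<and> set w \<subseteq> letters M)}"
definition ftens :: "el \<Rightarrow> el \<Rightarrow> tel" where "ftens p q = (\<lambda>(v,w). p v * q w)"
definition tadd :: "tel \<Rightarrow> tel \<Rightarrow> tel" where "tadd s t = (\<lambda>x. s x + t x)"
definition tsub :: "tel \<Rightarrow> tel \<Rightarrow> tel" where "tsub s t = (\<lambda>x. s x - t x)"
definition tscale :: "complex \<Rightarrow> tel \<Rightarrow> tel" where "tscale c t = (\<lambda>x. c * t x)"
definition tmul :: "tel \<Rightarrow> tel \<Rightarrow> tel" where
  "tmul s t = (\<lambda>(v,w). \<Sum>i\<le>length v. \<Sum>k\<le>length w.
                 s (take i v, take k w) * t (drop i v, drop k w))"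
definition tsumset :: "'i set \<Rightarrow> ('i \<Rightarrow> tel) \<Rightarrow> tel" where
  "tsumset S F = (\<lambda>x. \<Sum>i\<in>S. F i x)"
definition tlist :: "(el \<times> el) list \<Rightarrow> tel" where
  "tlist ps = (\<lambda>x. \<Sum>pq\<leftarrow>ps. ftens (fst pq) (snd pq) x)"

inductive_set tIdeal :: "nat \<Rightarrow> el set \<Rightarrow> tel set" for M I where
  zero: "(\<lambda>x. 0) \<in> tIdeal M I"
| left: "a \<in> I \<Longrightarrow> q \<in> Fr M \<Longrightarrow> ftens a q \<in> tIdeal M I"
| right: "p \<in> Fr M \<Longrightarrow> a \<in> I \<Longrightarrow> ftens p a \<in> tIdeal M I"
| add: "s \<in> tIdeal M I \<Longrightarrow> t \<in> tIdeal M I \<Longrightarrow> tadd s t \<in> tIdeal M I"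
| scale: "s \<in> tIdeal M I \<Longrightarrow> tscale c s \<in> tIdeal M I"

definition tcls :: "nat \<Rightarrow> el set \<Rightarrow> tel \<Rightarrow> tel set" where
  "tcls M I t = {s \<in> FF M. tsub t s \<in> tIdeal M I}"

definition dletter :: "nat \<Rightarrow> letter \<Rightarrow> tel" where
  "dletter M x = (case x of (j,k,b) \<Rightarrow> tsumset (idx M) (\<lambda>l. ftens (fgen (j,l,b)) (fgen (l,k,b))))"

primrec dword :: "nat \<Rightarrow> word \<Rightarrow> tel" where
  "dword M [] = ftens fone fone"
| "dword M (x # w) = tmul (dletter M x) (dword M w)"

definition fDelta :: "nat \<Rightarrow> el \<Rightarrow> tel" where
  "fDelta M f = (\<lambda>x. \<Sum>w\<in>{w. f w \<noteq> 0}. f w * dword M w x)"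

definition qDelta :: "nat \<Rightarrow> el set \<Rightarrow> el set \<Rightarrow> tel set" where
  "qDelta M I X = (\<Union>p\<in>X. tcls M I (fDelta M p))"

text \<open>CQG algebra isomorphism phi : A \<rightarrow> B (A \<subseteq> Fr M / I1, B \<subseteq> Fr M / I2):
  a bijective unital *-algebra homomorphism intertwining the comultiplications,
  i.e. (phi \<otimes> phi) o Delta = Delta o phi on A (with Delta(A) \<subseteq> A \<otimes> A).\<close>
definition cqg_iso :: "nat \<Rightarrow> el set \<Rightarrow> el set set \<Rightarrow> el set \<Rightarrow> el set set \<Rightarrow> (el set \<Rightarrow> el set) \<Rightarrow> bool" where
  "cqg_iso M I1 A I2 B \<phi> \<longleftrightarrow>
     bij_betw \<phi> A B
   \<and> \<phi> (qone M I1) = qone M I2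
   \<and> (\<forall>X\<in>A. \<forall>Y\<in>A. \<phi> (qadd M I1 X Y) = qadd M I2 (\<phi> X) (\<phi> Y))
   \<and> (\<forall>X\<in>A. \<forall>c. \<phi> (qscale M I1 c X) = qscale M I2 c (\<phi> X))
   \<and> (\<forall>X\<in>A. \<forall>Y\<in>A. \<phi> (qmul M I1 X Y) = qmul M I2 (\<phi> X) (\<phi> Y))
   \<and> (\<forall>X\<in>A. \<phi> (qstar M I1 X) = qstar M I2 (\<phi> X))
   \<and> (\<forall>X\<in>A. \<exists>ps ps' :: (el \<times> el) list.
          length ps' = length ps
        \<and> (\<forall>i<length ps. cls M I1 (fst (ps!i)) \<in> A \<and> cls M I1 (snd (ps!i)) \<in> A
              \<and> cls M I2 (fst (ps'!i)) = \<phi> (cls M I1 (fst (ps!i)))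
              \<and> cls M I2 (snd (ps'!i)) = \<phi> (cls M I1 (snd (ps!i))))
        \<and> qDelta M I1 X = tcls M I1 (tlist ps)
        \<and> qDelta M I2 (\<phi> X) = tcls M I2 (tlist ps'))"

definition gen_values :: "nat \<Rightarrow> (el set \<Rightarrow> el set) \<Rightarrow> bool" where
  "gen_values M \<phi> \<longleftrightarrow>
     (\<forall>j\<in>idx M. \<forall>k\<in>idx M. \<forall>l\<in>idx M. \<forall>m\<in>idx M.
        \<phi> (cls M (IU M) (fmul (us j k) (u l m))) = cls M (IO M) (fmul (us j k) (u l m)))"

end

theory Submission
  imports Defs
begin

section \<open>Generic convolution\<close>

definition cv :: "('m \<Rightarrow> 'm \<Rightarrow> 'm) \<Rightarrow> ('m \<Rightarrow> complex) \<Rightarrow> ('m \<Rightarrow> complex) \<Rightarrow> 'm \<Rightarrow> complex" where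
  "cv app f g w = (\<Sum>p\<in>{p. app (fst p) (snd p) = w}. f (fst p) * g (snd p))"

lemma cv_assoc:
  assumes A: "\<And>a b c. app (app a b) c = app a (app b c)"
    and F: "\<And>w. finite {p. app (fst p) (snd p) = w}"
  shows "cv app (cv app f g) h = cv app f (cv app g h)"
proof
  fix w
  let ?S = "{p. app (fst p) (snd p) = w}"
  have "cv app (cv app f g) h w = (\<Sum>p\<in>?S. \<Sum>q\<in>{q. app (fst q) (snd q) = fst p}. f (fst q) * g (snd q) * h (snd p))"
    unfolding cv_def by (simp add: sum_distrib_right)
  also have "\<dots> = (\<Sum>pq\<in>(SIGMA p:?S. {q. app (fst q) (snd q) = fst p}). f (fst (snd pq)) * g (snd (snd pq)) * h (snd (fst pq)))"
    by (subst sum.Sigma) (auto simp: F case_prod_beta)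
  also have "\<dots> = (\<Sum>pq\<in>(SIGMA p:?S. {q. app (fst q) (snd q) = snd p}). f (fst (fst pq)) * (g (fst (snd pq)) * h (snd (snd pq))))"
    apply (rule sum.reindex_bij_witness[where i = "\<lambda>((a,y),(b,c)). ((app a b, c),(a,b))" and j = "\<lambda>((x,c),(a,b)). ((a, app b c),(b,c))"])
    by (auto simp: A)
  also have "\<dots> = cv app f (cv app g h) w"
    unfolding cv_def sum_distrib_left by (subst sum.Sigma) (auto simp: F split_beta)
  finally show "cv app (cv app f g) h w = cv app f (cv app g h) w" .
qed

lemma cv_star:
  assumes R: "\<And>a b. \<rho> (app a b) = app (\<rho> b) (\<rho> a)" and RR: "\<And>a. \<rho> (\<rho> a) = a"
  shows "(\<lambda>w. cnj (cv app f g (\<rho> w))) = cv app (\<lambda>w. cnj (g (\<rho> w))) (\<lambda>w. cnj (f (\<rho> w)))"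
proof
  fix w
  show "cnj (cv app f g (\<rho> w)) = cv app (\<lambda>w. cnj (g (\<rho> w))) (\<lambda>w. cnj (f (\<rho> w))) w"
    unfolding cv_def cnj_sum
    apply (rule sum.reindex_bij_witness[where i = "\<lambda>(a,b). (\<rho> b, \<rho> a)" and j = "\<lambda>(a,b). (\<rho> b, \<rho> a)"])
    by (auto simp: RR R[symmetric])
qed

lemma cv_lin_l:
  "cv app (\<lambda>x. \<Sum>i\<in>I. c i * F i x) G = (\<lambda>x. \<Sum>i\<in>I. c i * cv app (F i) G x)"
  unfolding cv_def by (auto simp: sum_distrib_right sum_distrib_left mult.assoc intro!: ext sum.swap)

lemma cv_lin_r:
  "cv app G (\<lambda>x. \<Sum>i\<in>I. c i * F i x) = (\<lambda>x. \<Sum>i\<in>I. c i * cv app G (F i) x)"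
  unfolding cv_def by (auto simp: sum_distrib_right sum_distrib_left mult.assoc mult.left_commute intro!: ext sum.swap)

lemma splits_img: "{p. fst p @ snd p = w} = (\<lambda>i. (take i w, drop i w)) ` {..length w}"
  by (auto simp: append_eq_conv_conj image_iff intro!: exI[where x="length (fst _)"])
     (metis append_eq_conv_conj atMost_iff le_add1 length_append prod.collapse)

lemma splits_fin: "finite {p. fst p @ snd p = (w::'a list)}"
  by (simp add: splits_img)

lemma fmul_cv: "fmul f g = cv (@) f g"
proof
  fix w
  show "fmul f g w = cv (@) f g w"
    unfolding fmul_def cv_def
    apply (rule sum.reindex_bij_witness[where i = "\<lambda>p. length (fst p)" and j = "\<lambda>i. (take i w, drop i w)"])
    by (auto; metis append_eq_conv_conj le_add1 length_append prod.collapse)+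
qed

definition app2 :: "word \<times> word \<Rightarrow> word \<times> word \<Rightarrow> word \<times> word" where
  "app2 a b = (fst a @ fst b, snd a @ snd b)"

lemma app2_assoc: "app2 (app2 a b) c = app2 a (app2 b c)"
  by (simp add: app2_def)

lemma app2_fin: "finite {p. app2 (fst p) (snd p) = w}"
proof -
  have "{p. app2 (fst p) (snd p) = w} \<subseteq> (\<lambda>(a,b). ((fst a, fst b),(snd a, snd b))) ` ({p. fst p @ snd p = fst w} \<times> {p. fst p @ snd p = snd w})"
    by (auto simp: app2_def image_iff)
  moreover have "finite ((\<lambda>(a,b). ((fst a, fst b),(snd a, snd b))) ` ({p. fst p @ snd p = fst w} \<times> {p. fst p @ snd p = snd w}))"
    using splits_fin by blast
  ultimately show ?thesis by (rule finite_subset)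
qed

lemma tmul_cv: "tmul s t = cv app2 s t"
proof
  fix x
  obtain v w :: word where x: "x = (v,w)" by (cases x)
  have "tmul s t (v,w) = (\<Sum>ik\<in>{..length v} \<times> {..length w}. s (take (fst ik) v, take (snd ik) w) * t (drop (fst ik) v, drop (snd ik) w))"
    unfolding tmul_def by (simp add: sum.cartesian_product split_beta)
  also have "\<dots> = cv app2 s t (v,w)"
    unfolding cv_def
    apply (rule sum.reindex_bij_witness[where i = "\<lambda>P. (length (fst (fst P)), length (snd (fst P)))" and j = "\<lambda>(i,k). ((take i v, take k w),(drop i v, drop k w))"])
    by (auto simp: app2_def; metis append_eq_conv_conj le_add1 length_append prod.collapse)+
  finally show "tmul s t x = cv app2 s t x" by (simp add: x)
qed

lemma fmul_assoc: "fmul (fmul f g) h = fmul f (fmul g h)"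
  unfolding fmul_cv by (rule cv_assoc) (auto simp: splits_fin)

lemma tmul_assoc: "tmul (tmul f g) h = tmul f (tmul g h)"
  unfolding tmul_cv by (rule cv_assoc) (auto simp: app2_fin app2_assoc)

definition rho :: "word \<Rightarrow> word" where "rho w = rev (map flipl w)"

lemma flipl_flipl[simp]: "flipl (flipl x) = x"
  by (cases x) (auto simp: flipl_def)

lemma rho_rho[simp]: "rho (rho w) = w"
  by (simp add: rho_def rev_map comp_def)

lemma rho_app: "rho (a @ b) = rho b @ rho a"
  by (simp add: rho_def)

lemma fstar_rho: "fstar f = (\<lambda>w. cnj (f (rho w)))"
  by (simp add: fstar_def rho_def)

lemma fstar_fmul: "fstar (fmul f g) = fmul (fstar g) (fstar f)"
  unfolding fstar_rho fmul_cv by (rule cv_star) (auto simp: rho_app)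

definition tstar :: "tel \<Rightarrow> tel" where
  "tstar t = (\<lambda>(v,w). cnj (t (rho v, rho w)))"

definition rho2 :: "word \<times> word \<Rightarrow> word \<times> word" where "rho2 p = (rho (fst p), rho (snd p))"

lemma tstar_rho2: "tstar t = (\<lambda>P. cnj (t (rho2 P)))"
  by (auto simp: tstar_def rho2_def)

lemma tstar_tmul: "tstar (tmul f g) = tmul (tstar g) (tstar f)"
  unfolding tstar_rho2 tmul_cv by (rule cv_star) (auto simp: rho2_def app2_def rho_app)


definition supp :: "el \<Rightarrow> word set" where "supp f = {w. f w \<noteq> 0}"
definition fw :: "word \<Rightarrow> el" where "fw v = (\<lambda>w. if w = v then 1 else 0)"

lemma fsum_fw: "finite S \<Longrightarrow> supp f \<subseteq> S \<Longrightarrow> f = (\<lambda>w. \<Sum>v\<in>S. f v * fw v w)"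
  by (auto simp: fw_def supp_def intro!: ext) (auto simp: sum.delta' if_distrib cong: if_cong)

lemma fmul_fw_sum:
  assumes "finite A" "finite B" "supp f \<subseteq> A" "supp g \<subseteq> B"
  shows "fmul f g = (\<lambda>w. \<Sum>p\<in>A \<times> B. (f (fst p) * g (snd p)) * fw (fst p @ snd p) w)"
proof
  fix w
  have "fmul f g w = (\<Sum>p\<in>{p. fst p @ snd p = w}. f (fst p) * g (snd p))"
    by (simp add: fmul_cv cv_def)
  also have "\<dots> = (\<Sum>p\<in>{p\<in>A \<times> B. fst p @ snd p = w}. f (fst p) * g (snd p))"
    apply (rule sum.mono_neutral_cong_right)
    using assms by (auto simp: splits_fin supp_def)
  also have "\<dots> = (\<Sum>p\<in>A \<times> B. (f (fst p) * g (snd p)) * fw (fst p @ snd p) w)"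
    by (subst sum.inter_filter) (auto simp: assms fw_def intro!: sum.cong)
  finally show "fmul f g w = (\<Sum>p\<in>A \<times> B. (f (fst p) * g (snd p)) * fw (fst p @ snd p) w)" .
qed

lemma fstar_fw_sum:
  assumes "finite A" "supp f \<subseteq> A"
  shows "fstar f = (\<lambda>w. \<Sum>v\<in>A. cnj (f v) * fw (rho v) w)"
proof
  fix w
  have "fstar f w = cnj (f (rho w))" by (simp add: fstar_rho)
  also have "\<dots> = (\<Sum>v\<in>A. cnj (f v) * fw (rho v) w)"
  proof (cases "rho w \<in> A")
    case True
    have "(\<Sum>v\<in>A. cnj (f v) * fw (rho v) w) = (\<Sum>v\<in>A. if v = rho w then cnj (f v) else 0)"
      by (rule sum.cong) (auto simp: fw_def)
    then show ?thesis using True assms by simp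
  next
    case False
    have "(\<Sum>v\<in>A. cnj (f v) * fw (rho v) w) = 0"
      by (rule sum.neutral) (use False in \<open>auto simp: fw_def\<close>)
    then show ?thesis using False assms by (auto simp: supp_def)
  qed
  finally show "fstar f w = (\<Sum>v\<in>A. cnj (f v) * fw (rho v) w)" .
qed

locale ncalg =
  fixes mul :: "('x \<Rightarrow> complex) \<Rightarrow> ('x \<Rightarrow> complex) \<Rightarrow> 'x \<Rightarrow> complex"
    and one :: "'x \<Rightarrow> complex"
  assumes assoc: "mul (mul a b) c = mul a (mul b c)"
    and one_l: "mul one a = a" and one_r: "mul a one = a"
    and add_l: "mul (\<lambda>x. a x + b x) g = (\<lambda>x. mul a g x + mul b g x)"
    and scl_l: "mul (\<lambda>x. k * a x) g = (\<lambda>x. k * mul a g x)"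
    and add_r: "mul g (\<lambda>x. a x + b x) = (\<lambda>x. mul g a x + mul g b x)"
    and scl_r: "mul g (\<lambda>x. k * a x) = (\<lambda>x. k * mul g a x)"
begin

lemma zero_l: "mul (\<lambda>x. 0) g = (\<lambda>x. 0)"
  using scl_l[of 0 g g] by simp
lemma zero_r: "mul g (\<lambda>x. 0) = (\<lambda>x. 0)"
  using scl_r[of g 0 g] by simp

lemma sum_l: "mul (\<lambda>x. \<Sum>i\<in>I. F i x) G = (\<lambda>x. \<Sum>i\<in>I. mul (F i) G x)"
proof (induction I rule: infinite_finite_induct)
  case (infinite A) then show ?case by (simp add: zero_l)
next
  case empty then show ?case by (simp add: zero_l)
next
  case (insert i A) then show ?case by (simp add: add_l)
qed

lemma sum_r: "mul G (\<lambda>x. \<Sum>i\<in>I. F i x) = (\<lambda>x. \<Sum>i\<in>I. mul G (F i) x)"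
proof (induction I rule: infinite_finite_induct)
  case (infinite A) then show ?case by (simp add: zero_r)
next
  case empty then show ?case by (simp add: zero_r)
next
  case (insert i A) then show ?case by (simp add: add_r)
qed

lemma lin_l: "mul (\<lambda>x. \<Sum>i\<in>I. c i * F i x) G = (\<lambda>x. \<Sum>i\<in>I. c i * mul (F i) G x)"
  by (simp add: sum_l scl_l)

lemma lin_r: "mul G (\<lambda>x. \<Sum>i\<in>I. c i * F i x) = (\<lambda>x. \<Sum>i\<in>I. c i * mul G (F i) x)"
  by (simp add: sum_r scl_r)

definition wd :: "(letter \<Rightarrow> 'x \<Rightarrow> complex) \<Rightarrow> word \<Rightarrow> 'x \<Rightarrow> complex" where
  "wd L w = foldr (\<lambda>x acc. mul (L x) acc) w one"

definition ext :: "(letter \<Rightarrow> 'x \<Rightarrow> complex) \<Rightarrow> el \<Rightarrow> 'x \<Rightarrow> complex" where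
  "ext L f = (\<lambda>x. \<Sum>v\<in>supp f. f v * wd L v x)"

lemma wd_nil[simp]: "wd L [] = one" by (simp add: wd_def)
lemma wd_cons[simp]: "wd L (y # w) = mul (L y) (wd L w)" by (simp add: wd_def)
lemma wd_single: "wd L [y] = L y" by (simp add: one_r)

lemma wd_append: "wd L (a @ b) = mul (wd L a) (wd L b)"
  by (induction a) (simp_all add: one_l assoc)

lemma ext_sum: "finite S \<Longrightarrow> supp f \<subseteq> S \<Longrightarrow> ext L f = (\<lambda>x. \<Sum>v\<in>S. f v * wd L v x)"
  unfolding ext_def
  by (rule ext, rule sum.mono_neutral_left) (auto simp: supp_def)

lemma ext_lin:
  assumes K: "finite K"
  shows "ext L (\<lambda>w. \<Sum>i\<in>K. c i * fw (k i) w) = (\<lambda>x. \<Sum>i\<in>K. c i * wd L (k i) x)"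
proof -
  let ?f = "\<lambda>w. \<Sum>i\<in>K. c i * fw (k i) w"
  have s: "supp ?f \<subseteq> k ` K"
  proof
    fix w assume "w \<in> supp ?f"
    then have "(\<Sum>i\<in>K. c i * fw (k i) w) \<noteq> 0" by (simp add: supp_def)
    then obtain i where "i \<in> K" "c i * fw (k i) w \<noteq> 0" by (meson sum.neutral)
    then show "w \<in> k ` K" by (auto simp: fw_def split: if_splits)
  qed
  have fv: "?f v = (\<Sum>i\<in>{i\<in>K. k i = v}. c i)" for v
    using K by (simp add: sum.inter_filter fw_def) (rule sum.cong, auto)
  show ?thesis
  proof
    fix x
    have "ext L ?f x = (\<Sum>v\<in>k ` K. ?f v * wd L v x)"
      using ext_sum[OF finite_imageI[OF K] s] by simp
    also have "\<dots> = (\<Sum>v\<in>k ` K. \<Sum>i\<in>{i\<in>K. k i = v}. c i * wd L (k i) x)"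
      unfolding fv sum_distrib_right by (rule sum.cong) auto
    also have "\<dots> = (\<Sum>i\<in>K. c i * wd L (k i) x)"
      by (rule sum.image_gen[OF K, symmetric])
    finally show "ext L ?f x = (\<Sum>i\<in>K. c i * wd L (k i) x)" .
  qed
qed

lemma ext_fmul:
  assumes "finite (supp f)" "finite (supp g)"
  shows "ext L (fmul f g) = mul (ext L f) (ext L g)"
proof -
  have "ext L (fmul f g) = (\<lambda>x. \<Sum>p\<in>supp f \<times> supp g. (f (fst p) * g (snd p)) * wd L (fst p @ snd p) x)"
    by (subst fmul_fw_sum[OF assms order_refl order_refl], rule ext_lin) (simp add: assms)
  also have "\<dots> = (\<lambda>x. \<Sum>a\<in>supp f. \<Sum>b\<in>supp g. f a * (g b * mul (wd L a) (wd L b) x))"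
    by (simp add: sum.cartesian_product wd_append split_beta mult.assoc)
  also have "\<dots> = mul (ext L f) (ext L g)"
    unfolding ext_def lin_l lin_r by (simp add: sum_distrib_left)
  finally show ?thesis .
qed

lemma ext_fadd:
  assumes "finite (supp f)" "finite (supp g)"
  shows "ext L (fadd f g) = (\<lambda>x. ext L f x + ext L g x)"
proof -
  have s: "supp (fadd f g) \<subseteq> supp f \<union> supp g" by (auto simp: supp_def fadd_def)
  have fin: "finite (supp f \<union> supp g)" using assms by simp
  have "ext L (fadd f g) = (\<lambda>x. \<Sum>v\<in>supp f \<union> supp g. fadd f g v * wd L v x)"
    by (rule ext_sum[OF fin s])
  moreover have "ext L f = (\<lambda>x. \<Sum>v\<in>supp f \<union> supp g. f v * wd L v x)"
    by (rule ext_sum[OF fin]) auto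
  moreover have "ext L g = (\<lambda>x. \<Sum>v\<in>supp f \<union> supp g. g v * wd L v x)"
    by (rule ext_sum[OF fin]) auto
  ultimately show ?thesis
    by (simp add: fadd_def distrib_right sum.distrib)
qed

lemma ext_fscale:
  assumes "finite (supp f)"
  shows "ext L (fscale c f) = (\<lambda>x. c * ext L f x)"
proof -
  have s: "supp (fscale c f) \<subseteq> supp f" by (auto simp: supp_def fscale_def)
  have "ext L (fscale c f) = (\<lambda>x. \<Sum>v\<in>supp f. fscale c f v * wd L v x)"
    by (rule ext_sum[OF assms s])
  then show ?thesis
    by (simp add: ext_def fscale_def sum_distrib_left mult.assoc)
qed

lemma ext_fzero: "ext L fzero = (\<lambda>x. 0)"
  by (simp add: ext_def fzero_def supp_def)

lemma ext_fone: "ext L fone = one"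
proof -
  have "supp fone = {[]}" by (auto simp: supp_def fone_def)
  then show ?thesis by (simp add: ext_def fone_def)
qed

lemma ext_fgen: "ext L (fgen y) = L y"
proof -
  have "supp (fgen y) = {[y]}" by (auto simp: supp_def fgen_def)
  then show ?thesis by (simp add: ext_def fgen_def one_r)
qed

end

locale ncsalg = ncalg mul one for mul :: "('x \<Rightarrow> complex) \<Rightarrow> ('x \<Rightarrow> complex) \<Rightarrow> 'x \<Rightarrow> complex" and one +
  fixes st :: "('x \<Rightarrow> complex) \<Rightarrow> 'x \<Rightarrow> complex"
  assumes st_add: "st (\<lambda>x. a x + b x) = (\<lambda>x. st a x + st b x)"
    and st_scl: "st (\<lambda>x. c * a x) = (\<lambda>x. cnj c * st a x)"
    and st_mul: "st (mul a b) = mul (st b) (st a)"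
    and st_one: "st one = one"
begin

lemma st_zero: "st (\<lambda>x. 0) = (\<lambda>x. 0)"
  using st_scl[of 0 one] by simp

lemma st_sum: "st (\<lambda>x. \<Sum>i\<in>I. F i x) = (\<lambda>x. \<Sum>i\<in>I. st (F i) x)"
proof (induction I rule: infinite_finite_induct)
  case (infinite A) then show ?case by (simp add: st_zero)
next
  case empty then show ?case by (simp add: st_zero)
next
  case (insert i A) then show ?case by (simp add: st_add)
qed

lemma st_lin: "st (\<lambda>x. \<Sum>i\<in>I. c i * F i x) = (\<lambda>x. \<Sum>i\<in>I. cnj (c i) * st (F i) x)"
  by (simp add: st_sum st_scl)

lemma wd_rho:
  assumes HL: "\<And>y. L (flipl y) = st (L y)"
  shows "wd L (rho w) = st (wd L w)"
proof (induction w)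
  case Nil then show ?case by (simp add: rho_def st_one)
next
  case (Cons y w)
  have "rho (y # w) = rho w @ [flipl y]" by (simp add: rho_def)
  then show ?case using Cons by (simp add: wd_append one_r HL st_mul)
qed

lemma ext_fstar:
  assumes HL: "\<And>y. L (flipl y) = st (L y)" and F: "finite (supp f)"
  shows "ext L (fstar f) = st (ext L f)"
proof -
  have "ext L (fstar f) = (\<lambda>x. \<Sum>v\<in>supp f. cnj (f v) * wd L (rho v) x)"
    by (subst fstar_fw_sum[OF F order_refl], rule ext_lin) (simp add: F)
  also have "\<dots> = st (ext L f)"
    unfolding ext_def st_lin using HL by (simp add: wd_rho)
  finally show ?thesis .
qed

end


lemma Fr_iff: "f \<in> Fr M \<longleftrightarrow> finite (supp f) \<and> (\<forall>w\<in>supp f. set w \<subseteq> letters M)"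
  by (auto simp: Fr_def supp_def)

lemma Fr_fin: "f \<in> Fr M \<Longrightarrow> finite (supp f)" by (simp add: Fr_iff)

lemma Fr_supp_mono: "g \<in> Fr M \<Longrightarrow> supp f \<subseteq> supp g \<Longrightarrow> f \<in> Fr M"
  unfolding Fr_iff by (meson finite_subset subsetD)

lemma fzero_Fr[simp]: "fzero \<in> Fr M" by (simp add: Fr_iff supp_def fzero_def)
lemma fone_Fr[simp]: "fone \<in> Fr M" by (simp add: Fr_iff supp_def fone_def)
lemma fgen_Fr: "x \<in> letters M \<Longrightarrow> fgen x \<in> Fr M"
proof -
  have "supp (fgen x) = {[x]}" by (auto simp: supp_def fgen_def)
  then show "x \<in> letters M \<Longrightarrow> fgen x \<in> Fr M" by (simp add: Fr_iff)
qed

lemma idx_letters: "j \<in> idx M \<Longrightarrow> k \<in> idx M \<Longrightarrow> (j,k,b) \<in> letters M"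
  by (simp add: idx_def letters_def)

lemma u_Fr[simp]: "j \<in> idx M \<Longrightarrow> k \<in> idx M \<Longrightarrow> u j k \<in> Fr M"
  by (simp add: u_def fgen_Fr idx_letters)
lemma us_Fr[simp]: "j \<in> idx M \<Longrightarrow> k \<in> idx M \<Longrightarrow> us j k \<in> Fr M"
  by (simp add: us_def fgen_Fr idx_letters)

lemma fadd_Fr[simp]: "f \<in> Fr M \<Longrightarrow> g \<in> Fr M \<Longrightarrow> fadd f g \<in> Fr M"
proof -
  assume a: "f \<in> Fr M" "g \<in> Fr M"
  have "supp (fadd f g) \<subseteq> supp f \<union> supp g" by (auto simp: supp_def fadd_def)
  then show ?thesis using a unfolding Fr_iff by (meson Un_iff finite_Un finite_subset subsetD)
qed

lemma fscale_Fr[simp]: "f \<in> Fr M \<Longrightarrow> fscale c f \<in> Fr M"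
  by (rule Fr_supp_mono) (auto simp: supp_def fscale_def)

lemma fsub_eq: "fsub f g = fadd f (fscale (-1) g)"
  by (simp add: fsub_def fadd_def fscale_def fun_eq_iff)

lemma fsub_Fr[simp]: "f \<in> Fr M \<Longrightarrow> g \<in> Fr M \<Longrightarrow> fsub f g \<in> Fr M"
  by (simp add: fsub_eq)

lemma fsumset_Fr[simp]: "finite S \<Longrightarrow> (\<And>i. i \<in> S \<Longrightarrow> F i \<in> Fr M) \<Longrightarrow> fsumset S F \<in> Fr M"
proof (induction S rule: finite_induct)
  case empty
  have "fsumset {} F = fzero" by (simp add: fsumset_def fzero_def)
  then show ?case by simp
next
  case (insert i S)
  have "fsumset (insert i S) F = fadd (F i) (fsumset S F)"
    using insert by (simp add: fsumset_def fadd_def)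
  then show ?case using insert by simp
qed

lemma fmul_Fr[simp]: "f \<in> Fr M \<Longrightarrow> g \<in> Fr M \<Longrightarrow> fmul f g \<in> Fr M"
proof -
  assume a: "f \<in> Fr M" "g \<in> Fr M"
  have e: "fmul f g = (\<lambda>w. \<Sum>p\<in>supp f \<times> supp g. (f (fst p) * g (snd p)) * fw (fst p @ snd p) w)"
    using a by (intro fmul_fw_sum) (auto simp: Fr_fin)
  have S: "supp (fmul f g) \<subseteq> (\<lambda>p. fst p @ snd p) ` (supp f \<times> supp g)"
  proof
    fix w assume "w \<in> supp (fmul f g)"
    then have "(\<Sum>p\<in>supp f \<times> supp g. (f (fst p) * g (snd p)) * fw (fst p @ snd p) w) \<noteq> 0"
      by (simp add: supp_def e)
    then obtain p where p: "p \<in> supp f \<times> supp g" "(f (fst p) * g (snd p)) * fw (fst p @ snd p) w \<noteq> 0"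
      by (rule sum.not_neutral_contains_not_neutral)
    then have "w = fst p @ snd p" by (simp add: fw_def split: if_splits)
    then show "w \<in> (\<lambda>p. fst p @ snd p) ` (supp f \<times> supp g)" using p(1) by (rule image_eqI)
  qed
  have F: "finite ((\<lambda>p. fst p @ snd p) ` (supp f \<times> supp g))" using a by (simp add: Fr_fin)
  have L: "\<forall>w\<in>(\<lambda>p. fst p @ snd p) ` (supp f \<times> supp g). set w \<subseteq> letters M"
    using a by (auto simp: Fr_iff)
  show ?thesis unfolding Fr_iff using finite_subset[OF S F] S L by blast
qed

lemma flipl_letters: "x \<in> letters M \<Longrightarrow> flipl x \<in> letters M"
  by (cases x) (auto simp: letters_def flipl_def)

lemma fstar_Fr[simp]: "f \<in> Fr M \<Longrightarrow> fstar f \<in> Fr M"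
proof -
  assume a: "f \<in> Fr M"
  have "supp (fstar f) \<subseteq> rho ` supp f"
  proof
    fix w assume "w \<in> supp (fstar f)"
    then have "rho w \<in> supp f" by (simp add: supp_def fstar_rho)
    then show "w \<in> rho ` supp f" using rho_rho[of w] by (metis image_eqI)
  qed
  moreover have "finite (rho ` supp f)" using a by (simp add: Fr_fin)
  moreover have "\<forall>w\<in>rho ` supp f. set w \<subseteq> letters M"
  proof
    fix w assume "w \<in> rho ` supp f"
    then obtain v where v: "v \<in> supp f" "w = rho v" by auto
    then have sv: "set v \<subseteq> letters M" using a by (simp add: Fr_iff)
    show "set w \<subseteq> letters M" using v sv flipl_letters by (auto simp: rho_def)
  qed
  ultimately show ?thesis unfolding Fr_iff using finite_subset by blast
qed


lemma fmul_fsub_l: "fmul (fsub a b) c = fsub (fmul a c) (fmul b c)"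
  by (simp add: fmul_def fsub_def fun_eq_iff left_diff_distrib sum_subtractf)
lemma fmul_fsub_r: "fmul c (fsub a b) = fsub (fmul c a) (fmul c b)"
  by (simp add: fmul_def fsub_def fun_eq_iff right_diff_distrib sum_subtractf)
lemma fmul_fadd_l: "fmul (fadd a b) c = fadd (fmul a c) (fmul b c)"
  by (simp add: fmul_def fadd_def fun_eq_iff distrib_right sum.distrib)
lemma fmul_fadd_r: "fmul c (fadd a b) = fadd (fmul c a) (fmul c b)"
  by (simp add: fmul_def fadd_def fun_eq_iff distrib_left sum.distrib)
lemma fmul_fscale_l: "fmul (fscale k a) c = fscale k (fmul a c)"
  by (simp add: fmul_def fscale_def fun_eq_iff sum_distrib_left mult.assoc)
lemma fmul_fscale_r: "fmul c (fscale k a) = fscale k (fmul c a)"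
  by (simp add: fmul_def fscale_def fun_eq_iff sum_distrib_left mult.left_commute)
lemma fstar_fsub: "fstar (fsub a b) = fsub (fstar a) (fstar b)"
  by (simp add: fstar_def fsub_def)
lemma fstar_fadd: "fstar (fadd a b) = fadd (fstar a) (fstar b)"
  by (simp add: fstar_def fadd_def)
lemma fstar_fscale: "fstar (fscale k a) = fscale (cnj k) (fstar a)"
  by (simp add: fstar_def fscale_def)
lemma fsub_fscale: "fsub (fscale k a) (fscale k b) = fscale k (fsub a b)"
  by (simp add: fsub_def fscale_def fun_eq_iff right_diff_distrib)

section \<open>Ideals\<close>

context
  fixes M :: nat and R :: "el set"
  assumes RFr: "R \<subseteq> Fr M"
begin

lemma I_Fr: "a \<in> starIdeal M R \<Longrightarrow> a \<in> Fr M"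
  by (induction rule: starIdeal.induct) (use RFr in auto)

lemma I_sub: "a \<in> starIdeal M R \<Longrightarrow> b \<in> starIdeal M R \<Longrightarrow> fsub a b \<in> starIdeal M R"
  unfolding fsub_eq by (intro starIdeal.add starIdeal.scale)

lemma I_sum: "finite S \<Longrightarrow> (\<And>i. i \<in> S \<Longrightarrow> F i \<in> starIdeal M R) \<Longrightarrow> fsumset S F \<in> starIdeal M R"
proof (induction S rule: finite_induct)
  case empty
  have "fsumset {} F = fzero" by (simp add: fsumset_def fzero_def)
  then show ?case by (simp add: starIdeal.zero)
next
  case (insert i S)
  have "fsumset (insert i S) F = fadd (F i) (fsumset S F)"
    using insert by (simp add: fsumset_def fadd_def)
  then show ?case using insert by (simp add: starIdeal.add)
qed

lemma cls_mem: "p \<in> Fr M \<Longrightarrow> p \<in> cls M (starIdeal M R) p"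
proof -
  have "fsub p p = fzero" by (simp add: fsub_def fzero_def)
  then show "p \<in> Fr M \<Longrightarrow> p \<in> cls M (starIdeal M R) p" by (simp add: cls_def starIdeal.zero)
qed

lemma fsub_tri: "fsub a c = fadd (fsub a b) (fsub b c)"
  by (simp add: fsub_def fadd_def fun_eq_iff)

lemma fsub_swap: "fsub b a = fscale (-1) (fsub a b)"
  by (simp add: fsub_def fscale_def fun_eq_iff)

lemma cls_eq_iff: "p \<in> Fr M \<Longrightarrow> q \<in> Fr M \<Longrightarrow>
   cls M (starIdeal M R) p = cls M (starIdeal M R) q \<longleftrightarrow> fsub p q \<in> starIdeal M R"
proof
  assume p: "p \<in> Fr M" and q: "q \<in> Fr M"
  {
    assume "cls M (starIdeal M R) p = cls M (starIdeal M R) q"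
    then have "q \<in> cls M (starIdeal M R) p" using cls_mem[OF q] by simp
    then show "fsub p q \<in> starIdeal M R" by (simp add: cls_def)
  }
  {
    assume pq: "fsub p q \<in> starIdeal M R"
    show "cls M (starIdeal M R) p = cls M (starIdeal M R) q"
      unfolding cls_def
    proof (intro Collect_cong conj_cong refl)
      fix x
      show "(fsub p x \<in> starIdeal M R) = (fsub q x \<in> starIdeal M R)"
      proof
        assume px: "fsub p x \<in> starIdeal M R"
        have "fsub q x = fadd (fscale (-1) (fsub p q)) (fsub p x)"
          by (simp add: fsub_def fadd_def fscale_def fun_eq_iff)
        then show "fsub q x \<in> starIdeal M R"
          using pq px by (simp add: starIdeal.add starIdeal.scale)
      next
        assume qx: "fsub q x \<in> starIdeal M R"
        have "fsub p x = fadd (fsub p q) (fsub q x)"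
          by (simp add: fsub_def fadd_def fun_eq_iff)
        then show "fsub p x \<in> starIdeal M R"
          using pq qx by (simp add: starIdeal.add)
      qed
    qed
  }
qed

lemma cls_memD: "p' \<in> cls M (starIdeal M R) p \<Longrightarrow> p' \<in> Fr M \<and> fsub p p' \<in> starIdeal M R"
  by (simp add: cls_def)

lemma UN_cls:
  assumes p: "p \<in> Fr M"
    and h: "\<And>p'. p' \<in> cls M (starIdeal M R) p \<Longrightarrow> cls M (starIdeal M R) (h p') = cls M (starIdeal M R) (h p)"
  shows "(\<Union>p'\<in>cls M (starIdeal M R) p. cls M (starIdeal M R) (h p')) = cls M (starIdeal M R) (h p)"
proof -
  have "(\<Union>p'\<in>cls M (starIdeal M R) p. cls M (starIdeal M R) (h p')) = (\<Union>p'\<in>cls M (starIdeal M R) p. cls M (starIdeal M R) (h p))"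
    by (rule SUP_cong[OF refl h])
  then show ?thesis using cls_mem[OF p] by auto
qed

lemma UN_cls2:
  assumes p: "p \<in> Fr M" and q: "q \<in> Fr M"
    and h: "\<And>p' q'. p' \<in> cls M (starIdeal M R) p \<Longrightarrow> q' \<in> cls M (starIdeal M R) q \<Longrightarrow>
              cls M (starIdeal M R) (h p' q') = cls M (starIdeal M R) (h p q)"
  shows "(\<Union>p'\<in>cls M (starIdeal M R) p. \<Union>q'\<in>cls M (starIdeal M R) q. cls M (starIdeal M R) (h p' q')) = cls M (starIdeal M R) (h p q)"
proof -
  have "(\<Union>p'\<in>cls M (starIdeal M R) p. \<Union>q'\<in>cls M (starIdeal M R) q. cls M (starIdeal M R) (h p' q')) =
        (\<Union>p'\<in>cls M (starIdeal M R) p. \<Union>q'\<in>cls M (starIdeal M R) q. cls M (starIdeal M R) (h p q))"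
    by (rule SUP_cong[OF refl], rule SUP_cong[OF refl], rule h)
  then show ?thesis using cls_mem[OF p] cls_mem[OF q] by auto
qed

lemma qadd_cls: "p \<in> Fr M \<Longrightarrow> q \<in> Fr M \<Longrightarrow>
  qadd M (starIdeal M R) (cls M (starIdeal M R) p) (cls M (starIdeal M R) q) = cls M (starIdeal M R) (fadd p q)"
  unfolding qadd_def
proof (rule UN_cls2)
  fix p' q' assume "p \<in> Fr M" "q \<in> Fr M" "p' \<in> cls M (starIdeal M R) p" "q' \<in> cls M (starIdeal M R) q"
  moreover have "fsub (fadd p' q') (fadd p q) = fscale (-1) (fadd (fsub p p') (fsub q q'))"
    by (simp add: fsub_def fadd_def fscale_def fun_eq_iff)
  ultimately show "cls M (starIdeal M R) (fadd p' q') = cls M (starIdeal M R) (fadd p q)"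
    by (subst cls_eq_iff) (auto dest!: cls_memD intro!: starIdeal.scale starIdeal.add)
qed

lemma qscale_cls: "p \<in> Fr M \<Longrightarrow>
  qscale M (starIdeal M R) c (cls M (starIdeal M R) p) = cls M (starIdeal M R) (fscale c p)"
  unfolding qscale_def
proof (rule UN_cls)
  fix p' assume "p \<in> Fr M" "p' \<in> cls M (starIdeal M R) p"
  moreover have "fsub (fscale c p') (fscale c p) = fscale (-c) (fsub p p')"
    by (simp add: fsub_def fscale_def fun_eq_iff algebra_simps)
  ultimately show "cls M (starIdeal M R) (fscale c p') = cls M (starIdeal M R) (fscale c p)"
    by (subst cls_eq_iff) (auto dest!: cls_memD intro!: starIdeal.scale)
qed

lemma qstar_cls: "p \<in> Fr M \<Longrightarrow>
  qstar M (starIdeal M R) (cls M (starIdeal M R) p) = cls M (starIdeal M R) (fstar p)"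
  unfolding qstar_def
proof (rule UN_cls)
  fix p' assume "p \<in> Fr M" "p' \<in> cls M (starIdeal M R) p"
  moreover have "fsub (fstar p') (fstar p) = fscale (-1) (fstar (fsub p p'))"
    by (simp add: fsub_def fstar_def fscale_def fun_eq_iff)
  ultimately show "cls M (starIdeal M R) (fstar p') = cls M (starIdeal M R) (fstar p)"
    by (subst cls_eq_iff) (auto dest!: cls_memD intro!: starIdeal.scale starIdeal.star)
qed

lemma qmul_cls: "p \<in> Fr M \<Longrightarrow> q \<in> Fr M \<Longrightarrow>
  qmul M (starIdeal M R) (cls M (starIdeal M R) p) (cls M (starIdeal M R) q) = cls M (starIdeal M R) (fmul p q)"
  unfolding qmul_def
proof (rule UN_cls2)
  fix p' q' assume "p \<in> Fr M" "q \<in> Fr M" "p' \<in> cls M (starIdeal M R) p" "q' \<in> cls M (starIdeal M R) q"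
  moreover have "fsub (fmul p' q') (fmul p q) = fscale (-1) (fadd (fmul (fsub p p') q') (fmul p (fsub q q')))"
    by (simp add: fmul_fsub_l fmul_fsub_r) (simp add: fsub_def fadd_def fscale_def fun_eq_iff)
  ultimately show "cls M (starIdeal M R) (fmul p' q') = cls M (starIdeal M R) (fmul p q)"
    apply (subst cls_eq_iff)
      apply (auto dest!: cls_memD)
    apply (rule starIdeal.scale, rule starIdeal.add)
     apply (erule starIdeal.rmul, assumption)
    apply (erule starIdeal.lmul, assumption)
    done
qed

end

section \<open>Good representatives\<close>

inductive_set goodS :: "nat \<Rightarrow> el set" for M where
  one: "fone \<in> goodS M"
| gen: "j \<in> idx M \<Longrightarrow> k \<in> idx M \<Longrightarrow> l \<in> idx M \<Longrightarrow> m \<in> idx M \<Longrightarrow> fmul (us j k) (u l m) \<in> goodS M"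
| add: "p \<in> goodS M \<Longrightarrow> q \<in> goodS M \<Longrightarrow> fadd p q \<in> goodS M"
| scale: "p \<in> goodS M \<Longrightarrow> fscale c p \<in> goodS M"
| mul: "p \<in> goodS M \<Longrightarrow> q \<in> goodS M \<Longrightarrow> fmul p q \<in> goodS M"
| star: "p \<in> goodS M \<Longrightarrow> fstar p \<in> goodS M"

lemma goodS_Fr: "p \<in> goodS M \<Longrightarrow> p \<in> Fr M"
  by (induction rule: goodS.induct) auto

lemma subalgS_char:
  assumes RFr: "R \<subseteq> Fr M"
  shows "subalgS M (starIdeal M R) = cls M (starIdeal M R) ` goodS M"
proof
  show "subalgS M (starIdeal M R) \<subseteq> cls M (starIdeal M R) ` goodS M"
  proof
    fix X assume "X \<in> subalgS M (starIdeal M R)"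
    then show "X \<in> cls M (starIdeal M R) ` goodS M"
    proof (induction rule: subalgS.induct)
      case one then show ?case by (auto simp: qone_def intro: goodS.one)
    next
      case (gen j k l m) then show ?case by (auto intro: goodS.gen)
    next
      case (add X Y) then show ?case
        by (auto simp: qadd_cls[OF RFr] goodS_Fr intro!: imageI goodS.add)
    next
      case (scale X c) then show ?case
        by (auto simp: qscale_cls[OF RFr] goodS_Fr intro!: imageI goodS.scale)
    next
      case (mul X Y) then show ?case
        by (auto simp: qmul_cls[OF RFr] goodS_Fr intro!: imageI goodS.mul)
    next
      case (star X) then show ?case
        by (auto simp: qstar_cls[OF RFr] goodS_Fr intro!: imageI goodS.star)
    qed
  qed
  show "cls M (starIdeal M R) ` goodS M \<subseteq> subalgS M (starIdeal M R)"
  proof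
    fix X assume "X \<in> cls M (starIdeal M R) ` goodS M"
    then obtain p where p: "p \<in> goodS M" "X = cls M (starIdeal M R) p" by auto
    have "cls M (starIdeal M R) p \<in> subalgS M (starIdeal M R)" using p(1)
    proof (induction rule: goodS.induct)
      case one then show ?case using subalgS.one by (simp add: qone_def)
    next
      case (gen j k l m) then show ?case by (rule subalgS.gen)
    next
      case (add p q) then show ?case
        using subalgS.add[OF add.IH] by (simp add: qadd_cls[OF RFr] goodS_Fr)
    next
      case (scale p c) then show ?case
        using subalgS.scale[OF scale.IH] by (simp add: qscale_cls[OF RFr] goodS_Fr)
    next
      case (mul p q) then show ?case
        using subalgS.mul[OF mul.IH] by (simp add: qmul_cls[OF RFr] goodS_Fr)
    next
      case (star p) then show ?case
        using subalgS.star[OF star.IH] by (simp add: qstar_cls[OF RFr] goodS_Fr)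
    qed
    then show "X \<in> subalgS M (starIdeal M R)" using p by simp
  qed
qed


lemma cv_unit_l:
  assumes E: "\<And>p. app e p = p" and F: "finite {p. app (fst p) (snd p) = w}"
  shows "cv app (\<lambda>x. if x = e then 1 else 0) f w = f w"
proof -
  have "cv app (\<lambda>x. if x = e then 1 else 0) f w = (\<Sum>p\<in>{p. app (fst p) (snd p) = w}. if p = (e, w) then f w else 0)"
    unfolding cv_def by (rule sum.cong) (auto simp: E)
  also have "\<dots> = f w" using F by (simp add: E)
  finally show ?thesis .
qed

lemma cv_unit_r:
  assumes E: "\<And>p. app p e = p" and F: "finite {p. app (fst p) (snd p) = w}"
  shows "cv app f (\<lambda>x. if x = e then 1 else 0) w = f w"
proof -
  have "cv app f (\<lambda>x. if x = e then 1 else 0) w = (\<Sum>p\<in>{p. app (fst p) (snd p) = w}. if p = (w, e) then f w else 0)"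
    unfolding cv_def by (rule sum.cong) (auto simp: E)
  also have "\<dots> = f w" using F by (simp add: E)
  finally show ?thesis .
qed

lemma fone_eq: "fone = (\<lambda>x. if x = [] then 1 else 0)" by (simp add: fone_def fun_eq_iff)

lemma fmul_fone_l: "fmul fone f = f"
  unfolding fmul_cv fone_eq by (rule ext, rule cv_unit_l) (auto simp: splits_fin)
lemma fmul_fone_r: "fmul f fone = f"
  unfolding fmul_cv fone_eq by (rule ext, rule cv_unit_r) (auto simp: splits_fin)

lemma tone_eq: "ftens fone fone = (\<lambda>x. if x = ([],[]) then 1 else 0)"
  by (auto simp: ftens_def fone_def fun_eq_iff)

lemma tmul_one_l: "tmul (ftens fone fone) f = f"
  unfolding tmul_cv tone_eq apply (rule ext, rule cv_unit_l) apply (simp add: app2_def) by (rule app2_fin)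
lemma tmul_one_r: "tmul f (ftens fone fone) = f"
  unfolding tmul_cv tone_eq apply (rule ext, rule cv_unit_r) apply (simp add: app2_def) by (rule app2_fin)

lemma fmul_sum_l: "fmul (\<lambda>v. \<Sum>i\<in>I. F i v) G = (\<lambda>w. \<Sum>i\<in>I. fmul (F i) G w)"
  using cv_lin_l[where app="(@)" and c="\<lambda>_. 1" and I=I and F=F and G=G] by (simp add: fmul_cv)
lemma fmul_sum_r: "fmul G (\<lambda>v. \<Sum>i\<in>I. F i v) = (\<lambda>w. \<Sum>i\<in>I. fmul G (F i) w)"
  using cv_lin_r[where app="(@)" and c="\<lambda>_. 1" and I=I and F=F and G=G] by (simp add: fmul_cv)

interpretation TD: ncsalg tmul "ftens fone fone" tstar
proof
  fix a b c :: tel and k :: complex and g :: tel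
  show "tmul (tmul a b) c = tmul a (tmul b c)" by (rule tmul_assoc)
  show "tmul (ftens fone fone) a = a" by (rule tmul_one_l)
  show "tmul a (ftens fone fone) = a" by (rule tmul_one_r)
  show "tmul (\<lambda>x. a x + b x) g = (\<lambda>x. tmul a g x + tmul b g x)"
    by (simp add: tmul_def fun_eq_iff distrib_right sum.distrib split_beta)
  show "tmul (\<lambda>x. k * a x) g = (\<lambda>x. k * tmul a g x)"
    by (simp add: tmul_def fun_eq_iff sum_distrib_left mult.assoc split_beta)
  show "tmul g (\<lambda>x. a x + b x) = (\<lambda>x. tmul g a x + tmul g b x)"
    by (simp add: tmul_def fun_eq_iff distrib_left sum.distrib split_beta)
  show "tmul g (\<lambda>x. k * a x) = (\<lambda>x. k * tmul g a x)"
    by (simp add: tmul_def fun_eq_iff sum_distrib_left mult.left_commute split_beta)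
  show "tstar (\<lambda>x. a x + b x) = (\<lambda>x. tstar a x + tstar b x)"
    by (simp add: tstar_def fun_eq_iff split_beta)
  show "tstar (\<lambda>x. k * a x) = (\<lambda>x. cnj k * tstar a x)"
    by (simp add: tstar_def fun_eq_iff split_beta)
  show "tstar (tmul a b) = tmul (tstar b) (tstar a)" by (rule tstar_tmul)
  show "tstar (ftens fone fone) = ftens fone fone"
    by (auto simp: tstar_def ftens_def fone_def fun_eq_iff rho_def)
qed

lemma dword_wd: "dword M w = TD.wd (dletter M) w"
  by (induction w) auto

lemma fDelta_ext: "fDelta M f = TD.ext (dletter M) f"
  by (simp add: fDelta_def TD.ext_def supp_def dword_wd)

lemma fstar_fgen: "fstar (fgen x) = fgen (flipl x)"
  by (auto simp: fstar_rho fgen_def rho_def fun_eq_iff)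

lemma tstar_ftens: "tstar (ftens a b) = ftens (fstar a) (fstar b)"
  by (simp add: tstar_def ftens_def fstar_rho fun_eq_iff)

lemma map_flipl_eq: "map flipl a = b \<longleftrightarrow> a = map flipl b"
  by (auto simp: o_def)

lemma map_flipl_single: "map flipl a = [y] \<longleftrightarrow> a = [flipl y]"
  by (simp add: map_flipl_eq)

lemma cnj_ind[simp]: "cnj (if P then 1 else 0) = (if P then 1 else 0)" by simp

lemma flipl_simp[simp]: "flipl (j,k,b) = (j,k,\<not>b)" by (simp add: flipl_def)

lemma dletter_flip: "dletter M (flipl y) = tstar (dletter M y)"
proof -
  obtain j k b where y: "y = (j,k,b)" by (cases y)
  show ?thesis
    by (simp add: y dletter_def tsumset_def tstar_def ftens_def fstar_rho fgen_def rho_def fun_eq_iff split_beta map_flipl_single)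
qed

lemma fDelta_fmul: "f \<in> Fr M \<Longrightarrow> g \<in> Fr M \<Longrightarrow> fDelta M (fmul f g) = tmul (fDelta M f) (fDelta M g)"
  by (simp add: fDelta_ext TD.ext_fmul Fr_fin)
lemma fDelta_fadd: "f \<in> Fr M \<Longrightarrow> g \<in> Fr M \<Longrightarrow> fDelta M (fadd f g) = tadd (fDelta M f) (fDelta M g)"
  by (simp add: fDelta_ext TD.ext_fadd Fr_fin tadd_def)
lemma fDelta_fscale: "f \<in> Fr M \<Longrightarrow> fDelta M (fscale c f) = tscale c (fDelta M f)"
  by (simp add: fDelta_ext TD.ext_fscale Fr_fin tscale_def)
lemma fDelta_fstar: "f \<in> Fr M \<Longrightarrow> fDelta M (fstar f) = tstar (fDelta M f)"
  by (simp add: fDelta_ext Fr_fin dletter_flip TD.ext_fstar)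
lemma fDelta_fone: "fDelta M fone = ftens fone fone"
  by (simp add: fDelta_ext TD.ext_fone)
lemma fDelta_fzero: "fDelta M fzero = (\<lambda>x. 0)"
  by (simp add: fDelta_ext TD.ext_fzero)
lemma fDelta_fgen: "fDelta M (fgen y) = dletter M y"
  by (simp add: fDelta_ext TD.ext_fgen)


datatype nc = NC (un: el)

lemma nc_eq_iff: "a = b \<longleftrightarrow> un a = un b"
  by (cases a, cases b) auto

instantiation nc :: ring_1
begin
definition zero_nc_def: "0 = NC fzero"
definition one_nc_def: "1 = NC fone"
definition plus_nc_def: "a + b = NC (fadd (un a) (un b))"
definition minus_nc_def: "a - b = NC (fsub (un a) (un b))"
definition uminus_nc_def: "- a = NC (fscale (-1) (un a))"
definition times_nc_def: "a * b = NC (fmul (un a) (un b))"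
instance
proof
  fix a b c :: nc
  show "a + b + c = a + (b + c)" by (simp add: plus_nc_def fadd_def add.assoc)
  show "a + b = b + a" by (simp add: plus_nc_def fadd_def add.commute)
  show "0 + a = a" by (cases a) (simp add: plus_nc_def zero_nc_def fadd_def fzero_def)
  show "- a + a = 0" by (simp add: plus_nc_def zero_nc_def uminus_nc_def fadd_def fzero_def fscale_def)
  show "a - b = a + - b" by (simp add: plus_nc_def minus_nc_def uminus_nc_def fadd_def fsub_def fscale_def)
  show "a * b * c = a * (b * c)" by (simp add: times_nc_def fmul_assoc)
  show "(a + b) * c = a * c + b * c" by (simp add: times_nc_def plus_nc_def fmul_fadd_l)
  show "a * (b + c) = a * b + a * c" by (simp add: times_nc_def plus_nc_def fmul_fadd_r)
  show "1 * a = a" by (cases a) (simp add: times_nc_def one_nc_def fmul_fone_l)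
  show "a * 1 = a" by (cases a) (simp add: times_nc_def one_nc_def fmul_fone_r)
  show "(0::nc) \<noteq> 1" by (simp add: zero_nc_def one_nc_def fzero_def fone_def fun_eq_iff)
qed
end

definition cs :: "complex \<Rightarrow> nc" where "cs c = NC (fscale c fone)"

lemma NC_fadd: "NC (fadd f g) = NC f + NC g" by (simp add: plus_nc_def)
lemma NC_fsub: "NC (fsub f g) = NC f - NC g" by (simp add: minus_nc_def)
lemma NC_fmul: "NC (fmul f g) = NC f * NC g" by (simp add: times_nc_def)
lemma NC_fzero: "NC fzero = 0" by (simp add: zero_nc_def)
lemma NC_fone: "NC fone = 1" by (simp add: one_nc_def)
lemma NC_fscale: "NC (fscale c f) = cs c * NC f"
  by (simp add: times_nc_def cs_def fmul_fscale_l fmul_fone_l)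
lemma un_0: "un 0 = fzero" by (simp add: zero_nc_def)
lemma un_1: "un 1 = fone" by (simp add: one_nc_def)
lemma un_plus: "un (a + b) = fadd (un a) (un b)" by (simp add: plus_nc_def)
lemma un_minus: "un (a - b) = fsub (un a) (un b)" by (simp add: minus_nc_def)
lemma un_uminus: "un (- a) = fscale (-1) (un a)" by (simp add: uminus_nc_def)
lemma un_times: "un (a * b) = fmul (un a) (un b)" by (simp add: times_nc_def)

lemma NC_fsumset: "NC (fsumset S F) = (\<Sum>i\<in>S. NC (F i))"
proof (induction S rule: infinite_finite_induct)
  case (infinite A)
  then show ?case by (simp add: fsumset_def NC_fzero[symmetric] fzero_def)
next
  case empty
  then show ?case by (simp add: fsumset_def NC_fzero[symmetric] fzero_def)
next
  case (insert i A)
  have "fsumset (insert i A) F = fadd (F i) (fsumset A F)"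
    using insert by (simp add: fsumset_def fadd_def)
  then show ?case using insert by (simp add: NC_fadd)
qed

lemma cs_0[simp]: "cs 0 = 0" by (simp add: cs_def zero_nc_def fscale_def fzero_def)
lemma cs_1[simp]: "cs 1 = 1" by (simp add: cs_def one_nc_def fscale_def)
lemma cs_mult: "cs (a * b) = cs a * cs b"
  by (simp add: cs_def times_nc_def fmul_fscale_l fmul_fscale_r fmul_fone_l) (simp add: fscale_def mult_ac)
lemma cs_add: "cs (a + b) = cs a + cs b"
  by (simp add: cs_def plus_nc_def fscale_def fadd_def distrib_right)
lemma cs_uminus: "cs (- a) = - cs a"
  by (simp add: cs_def uminus_nc_def fscale_def)
lemma cs_comm: "cs c * x = x * cs c"
  by (simp add: cs_def times_nc_def fmul_fscale_l fmul_fscale_r fmul_fone_l fmul_fone_r)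

definition nstar :: "nc \<Rightarrow> nc" where "nstar a = NC (fstar (un a))"

lemma nstar_mult: "nstar (a * b) = nstar b * nstar a" by (simp add: nstar_def times_nc_def fstar_fmul)
lemma nstar_add: "nstar (a + b) = nstar a + nstar b" by (simp add: nstar_def plus_nc_def fstar_fadd)
lemma nstar_diff: "nstar (a - b) = nstar a - nstar b" by (simp add: nstar_def minus_nc_def fstar_fsub)
lemma nstar_1: "nstar 1 = 1"
  by (simp add: nstar_def one_nc_def fstar_rho fone_def rho_def)

datatype tn = TN (ut: tel)

instantiation tn :: ring_1
begin
definition zero_tn_def: "0 = TN (\<lambda>x. 0)"
definition one_tn_def: "1 = TN (ftens fone fone)"
definition plus_tn_def: "a + b = TN (tadd (ut a) (ut b))"
definition minus_tn_def: "a - b = TN (tsub (ut a) (ut b))"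
definition uminus_tn_def: "- a = TN (tscale (-1) (ut a))"
definition times_tn_def: "a * b = TN (tmul (ut a) (ut b))"
instance
proof
  fix a b c :: tn
  show "a + b + c = a + (b + c)" by (simp add: plus_tn_def tadd_def add.assoc)
  show "a + b = b + a" by (simp add: plus_tn_def tadd_def add.commute)
  show "0 + a = a" by (cases a) (simp add: plus_tn_def zero_tn_def tadd_def)
  show "- a + a = 0" by (simp add: plus_tn_def zero_tn_def uminus_tn_def tadd_def tscale_def)
  show "a - b = a + - b" by (simp add: plus_tn_def minus_tn_def uminus_tn_def tadd_def tsub_def tscale_def)
  show "a * b * c = a * (b * c)" by (simp add: times_tn_def tmul_assoc)
  show "(a + b) * c = a * c + b * c" by (simp add: times_tn_def plus_tn_def tadd_def TD.add_l)
  show "a * (b + c) = a * b + a * c" by (simp add: times_tn_def plus_tn_def tadd_def TD.add_r)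
  show "1 * a = a" by (cases a) (simp add: times_tn_def one_tn_def tmul_one_l)
  show "a * 1 = a" by (cases a) (simp add: times_tn_def one_tn_def tmul_one_r)
  show "(0::tn) \<noteq> 1" by (simp add: zero_tn_def one_tn_def ftens_def fone_def fun_eq_iff)
qed
end

definition tens :: "nc \<Rightarrow> nc \<Rightarrow> tn" where "tens a b = TN (ftens (un a) (un b))"

lemma ftens_tmul: "tmul (ftens a b) (ftens c d) = ftens (fmul a c) (fmul b d)"
  by (simp add: tmul_def ftens_def fmul_def fun_eq_iff sum_product mult_ac)

lemma tens_mult: "tens a b * tens c d = tens (a * c) (b * d)"
  by (simp add: tens_def times_tn_def times_nc_def ftens_tmul)
lemma tens_add_l: "tens (a + b) c = tens a c + tens b c"
  by (simp add: tens_def plus_tn_def plus_nc_def ftens_def tadd_def fadd_def fun_eq_iff split_beta distrib_right)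
lemma tens_add_r: "tens c (a + b) = tens c a + tens c b"
  by (simp add: tens_def plus_tn_def plus_nc_def ftens_def tadd_def fadd_def fun_eq_iff split_beta distrib_left)
lemma tens_diff_l: "tens (a - b) c = tens a c - tens b c"
  by (simp add: tens_def minus_tn_def minus_nc_def ftens_def tsub_def fsub_def fun_eq_iff split_beta left_diff_distrib)
lemma tens_diff_r: "tens c (a - b) = tens c a - tens c b"
  by (simp add: tens_def minus_tn_def minus_nc_def ftens_def tsub_def fsub_def fun_eq_iff split_beta right_diff_distrib)
lemma tens_uminus_l: "tens (- a) c = - tens a c"
  by (simp add: tens_def uminus_tn_def uminus_nc_def ftens_def tscale_def fscale_def fun_eq_iff split_beta)
lemma tens_uminus_r: "tens c (- a) = - tens c a"
  by (simp add: tens_def uminus_tn_def uminus_nc_def ftens_def tscale_def fscale_def fun_eq_iff split_beta)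
lemma tens_0_l: "tens 0 c = 0"
  by (simp add: tens_def zero_tn_def zero_nc_def ftens_def fzero_def fun_eq_iff split_beta)
lemma tens_0_r: "tens c 0 = 0"
  by (simp add: tens_def zero_tn_def zero_nc_def ftens_def fzero_def fun_eq_iff split_beta)
lemma tens_1: "tens 1 1 = 1" by (simp add: tens_def one_tn_def one_nc_def)
lemma tens_sum_l: "tens (\<Sum>i\<in>S. F i) c = (\<Sum>i\<in>S. tens (F i) c)"
  by (induction S rule: infinite_finite_induct) (simp_all add: tens_0_l tens_add_l)
lemma tens_sum_r: "tens c (\<Sum>i\<in>S. F i) = (\<Sum>i\<in>S. tens c (F i))"
  by (induction S rule: infinite_finite_induct) (simp_all add: tens_0_r tens_add_r)

lemmas tens_simps = tens_add_l tens_add_r tens_diff_l tens_diff_r tens_uminus_l tens_uminus_r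
  tens_0_l tens_0_r tens_sum_l tens_sum_r tens_mult

lemma TN_tadd: "TN (tadd s t) = TN s + TN t" by (simp add: plus_tn_def)
lemma TN_tsub: "TN (tsub s t) = TN s - TN t" by (simp add: minus_tn_def)
lemma TN_tmul: "TN (tmul s t) = TN s * TN t" by (simp add: times_tn_def)
lemma TN_zero: "TN (\<lambda>x. 0) = 0" by (simp add: zero_tn_def)
lemma TN_one: "TN (ftens fone fone) = 1" by (simp add: one_tn_def)
lemma TN_ftens: "TN (ftens a b) = tens (NC a) (NC b)" by (simp add: tens_def)
lemma ut_plus: "ut (a + b) = tadd (ut a) (ut b)" by (simp add: plus_tn_def)
lemma ut_minus: "ut (a - b) = tsub (ut a) (ut b)" by (simp add: minus_tn_def)
lemma ut_uminus: "ut (- a) = tscale (-1) (ut a)" by (simp add: uminus_tn_def)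
lemma ut_0: "ut 0 = (\<lambda>x. 0)" by (simp add: zero_tn_def)

lemma TN_tsumset: "TN (tsumset S F) = (\<Sum>i\<in>S. TN (F i))"
proof (induction S rule: infinite_finite_induct)
  case (infinite A)
  then show ?case by (simp add: tsumset_def TN_zero[symmetric])
next
  case empty
  then show ?case by (simp add: tsumset_def TN_zero[symmetric])
next
  case (insert i A)
  have "tsumset (insert i A) F = tadd (F i) (tsumset A F)"
    using insert by (simp add: tsumset_def tadd_def)
  then show ?case using insert by (simp add: TN_tadd)
qed

definition Dl :: "nat \<Rightarrow> nc \<Rightarrow> tn" where "Dl M a = TN (fDelta M (un a))"

definition G :: "bool \<Rightarrow> nat \<Rightarrow> nat \<Rightarrow> nc" where "G b j k = NC (fgen (j,k,b))"

lemma G_Fr: "j \<in> idx M \<Longrightarrow> k \<in> idx M \<Longrightarrow> un (G b j k) \<in> Fr M"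
  by (simp add: G_def fgen_Fr idx_letters)

lemma Dl_mult: "un a \<in> Fr M \<Longrightarrow> un b \<in> Fr M \<Longrightarrow> Dl M (a * b) = Dl M a * Dl M b"
  by (simp add: Dl_def un_times fDelta_fmul TN_tmul)
lemma Dl_add: "un a \<in> Fr M \<Longrightarrow> un b \<in> Fr M \<Longrightarrow> Dl M (a + b) = Dl M a + Dl M b"
  by (simp add: Dl_def un_plus fDelta_fadd TN_tadd)
lemma Dl_uminus: "un a \<in> Fr M \<Longrightarrow> Dl M (- a) = - Dl M a"
  by (simp add: Dl_def un_uminus fDelta_fscale uminus_tn_def)
lemma Dl_diff: "un a \<in> Fr M \<Longrightarrow> un b \<in> Fr M \<Longrightarrow> Dl M (a - b) = Dl M a - Dl M b"
proof -
  assume a: "un a \<in> Fr M" "un b \<in> Fr M"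
  have "un (- b) \<in> Fr M" using a by (simp add: un_uminus)
  then have "Dl M (a + - b) = Dl M a + - Dl M b" using a by (simp only: Dl_add Dl_uminus)
  then show ?thesis by simp
qed
lemma Dl_1: "Dl M 1 = 1" by (simp add: Dl_def un_1 fDelta_fone TN_one)
lemma Dl_0: "Dl M 0 = 0" by (simp add: Dl_def un_0 fDelta_fzero TN_zero)
lemma un_sum_Fr: "finite S \<Longrightarrow> (\<And>i. i \<in> S \<Longrightarrow> un (F i) \<in> Fr M) \<Longrightarrow> un (\<Sum>i\<in>S. F i) \<in> Fr M"
  by (induction S rule: finite_induct) (simp_all add: un_0 un_plus)


lemma Dl_sum: "finite S \<Longrightarrow> (\<And>i. i \<in> S \<Longrightarrow> un (F i) \<in> Fr M) \<Longrightarrow> Dl M (\<Sum>i\<in>S. F i) = (\<Sum>i\<in>S. Dl M (F i))"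
proof (induction S rule: finite_induct)
  case empty then show ?case by (simp add: Dl_0)
next
  case (insert i S)
  have "un (\<Sum>i\<in>S. F i) \<in> Fr M"
    using insert by (simp add: un_sum_Fr)
  then show ?case using insert by (simp add: Dl_add)
qed
lemma Dl_G: "Dl M (G b j k) = (\<Sum>l\<in>idx M. tens (G b j l) (G b l k))"
  by (simp add: Dl_def G_def fDelta_fgen dletter_def TN_tsumset TN_ftens)



lemma tsub_eq: "tsub s t = tadd s (tscale (-1) t)"
  by (simp add: tsub_def tadd_def tscale_def fun_eq_iff)

lemma tI_sub: "s \<in> tIdeal M I \<Longrightarrow> t \<in> tIdeal M I \<Longrightarrow> tsub s t \<in> tIdeal M I"
  unfolding tsub_eq by (intro tIdeal.add tIdeal.scale)

inductive_set TS :: "nat \<Rightarrow> tel set" for M where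
  zero: "(\<lambda>x. 0) \<in> TS M"
| tens: "p \<in> Fr M \<Longrightarrow> q \<in> Fr M \<Longrightarrow> ftens p q \<in> TS M"
| add: "s \<in> TS M \<Longrightarrow> t \<in> TS M \<Longrightarrow> tadd s t \<in> TS M"
| scale: "s \<in> TS M \<Longrightarrow> tscale c s \<in> TS M"

lemma TS_sum: "finite S \<Longrightarrow> (\<And>i. i \<in> S \<Longrightarrow> F i \<in> TS M) \<Longrightarrow> (\<lambda>x. \<Sum>i\<in>S. c i * F i x) \<in> TS M"
proof (induction S rule: finite_induct)
  case empty then show ?case by (simp add: TS.zero)
next
  case (insert i S)
  have "(\<lambda>x. \<Sum>i\<in>insert i S. c i * F i x) = tadd (tscale (c i) (F i)) (\<lambda>x. \<Sum>i\<in>S. c i * F i x)"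
    using insert by (simp add: tadd_def tscale_def)
  then show ?case using insert by (simp add: TS.add TS.scale)
qed

lemma tIdeal_sum: "finite S \<Longrightarrow> (\<And>i. i \<in> S \<Longrightarrow> F i \<in> tIdeal M I) \<Longrightarrow> (\<lambda>x. \<Sum>i\<in>S. c i * F i x) \<in> tIdeal M I"
proof (induction S rule: finite_induct)
  case empty then show ?case by (simp add: tIdeal.zero)
next
  case (insert i S)
  have "(\<lambda>x. \<Sum>i\<in>insert i S. c i * F i x) = tadd (tscale (c i) (F i)) (\<lambda>x. \<Sum>i\<in>S. c i * F i x)"
    using insert by (simp add: tadd_def tscale_def)
  then show ?case using insert by (simp add: tIdeal.add tIdeal.scale)
qed

lemma TS_mul: "s \<in> TS M \<Longrightarrow> t \<in> TS M \<Longrightarrow> tmul s t \<in> TS M"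
proof (induction s rule: TS.induct)
  case zero then show ?case by (simp add: TD.zero_l TS.zero)
next
  case (tens p q)
  from tens(3) show ?case
  proof (induction t rule: TS.induct)
    case zero then show ?case by (simp add: TD.zero_r TS.zero)
  next
    case (tens p' q') then show ?case using \<open>p \<in> Fr M\<close> \<open>q \<in> Fr M\<close> by (simp add: ftens_tmul TS.tens)
  next
    case (add s t) then show ?case by (simp add: tadd_def TD.add_r TS.add[unfolded tadd_def])
  next
    case (scale s c) then show ?case by (simp add: tscale_def TD.scl_r TS.scale[unfolded tscale_def])
  qed
next
  case (add s1 s2) then show ?case by (simp add: tadd_def TD.add_l TS.add[unfolded tadd_def])
next
  case (scale s c) then show ?case by (simp add: tscale_def TD.scl_l TS.scale[unfolded tscale_def])
qed

context
  fixes M :: nat and R :: "el set"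
  assumes RFr: "R \<subseteq> Fr M"
begin

lemma TS_tI_mul: "s \<in> TS M \<Longrightarrow> t \<in> tIdeal M (starIdeal M R) \<Longrightarrow> tmul s t \<in> tIdeal M (starIdeal M R)"
proof (induction s rule: TS.induct)
  case zero then show ?case by (simp add: TD.zero_l tIdeal.zero)
next
  case (tens p q)
  from tens(3) show ?case
  proof (induction t rule: tIdeal.induct)
    case zero then show ?case by (simp add: TD.zero_r tIdeal.zero)
  next
    case (left a q') then show ?case using \<open>p \<in> Fr M\<close> \<open>q \<in> Fr M\<close>
      by (simp add: ftens_tmul tIdeal.left starIdeal.lmul I_Fr[OF RFr])
  next
    case (right p' a) then show ?case using \<open>p \<in> Fr M\<close> \<open>q \<in> Fr M\<close>
      by (simp add: ftens_tmul tIdeal.right starIdeal.lmul)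
  next
    case (add s t) then show ?case by (simp add: tadd_def TD.add_r tIdeal.add[unfolded tadd_def])
  next
    case (scale s c) then show ?case by (simp add: tscale_def TD.scl_r tIdeal.scale[unfolded tscale_def])
  qed
next
  case (add s1 s2) then show ?case by (simp add: tadd_def TD.add_l tIdeal.add[unfolded tadd_def])
next
  case (scale s c) then show ?case by (simp add: tscale_def TD.scl_l tIdeal.scale[unfolded tscale_def])
qed

lemma tI_TS_mul: "s \<in> TS M \<Longrightarrow> t \<in> tIdeal M (starIdeal M R) \<Longrightarrow> tmul t s \<in> tIdeal M (starIdeal M R)"
proof (induction s rule: TS.induct)
  case zero then show ?case by (simp add: TD.zero_r tIdeal.zero)
next
  case (tens p q)
  from tens(3) show ?case
  proof (induction t rule: tIdeal.induct)
    case zero then show ?case by (simp add: TD.zero_l tIdeal.zero)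
  next
    case (left a q') then show ?case using \<open>p \<in> Fr M\<close> \<open>q \<in> Fr M\<close>
      by (simp add: ftens_tmul tIdeal.left starIdeal.rmul)
  next
    case (right p' a) then show ?case using \<open>p \<in> Fr M\<close> \<open>q \<in> Fr M\<close>
      by (simp add: ftens_tmul tIdeal.right starIdeal.rmul)
  next
    case (add s t) then show ?case by (simp add: tadd_def TD.add_l tIdeal.add[unfolded tadd_def])
  next
    case (scale s c) then show ?case by (simp add: tscale_def TD.scl_l tIdeal.scale[unfolded tscale_def])
  qed
next
  case (add s1 s2) then show ?case by (simp add: tadd_def TD.add_r tIdeal.add[unfolded tadd_def])
next
  case (scale s c) then show ?case by (simp add: tscale_def TD.scl_r tIdeal.scale[unfolded tscale_def])
qed

lemma tI_star: "t \<in> tIdeal M (starIdeal M R) \<Longrightarrow> tstar t \<in> tIdeal M (starIdeal M R)"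
proof (induction t rule: tIdeal.induct)
  case zero then show ?case using TD.st_zero by (simp add: tIdeal.zero)
next
  case (left a q) then show ?case by (simp add: tstar_ftens tIdeal.left starIdeal.star)
next
  case (right p a) then show ?case by (simp add: tstar_ftens tIdeal.right starIdeal.star)
next
  case (add s t) then show ?case by (simp add: tadd_def TD.st_add tIdeal.add[unfolded tadd_def])
next
  case (scale s c) then show ?case by (simp add: tscale_def TD.st_scl tIdeal.scale[unfolded tscale_def])
qed

end

lemma dletter_TS: "y \<in> letters M \<Longrightarrow> dletter M y \<in> TS M"
proof -
  assume y: "y \<in> letters M"
  obtain j k b where jkb: "y = (j,k,b)" by (cases y)
  have "dletter M y = (\<lambda>x. \<Sum>l\<in>idx M. 1 * ftens (fgen (j,l,b)) (fgen (l,k,b)) x)"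
    by (simp add: jkb dletter_def tsumset_def)
  also have "\<dots> \<in> TS M"
    using y by (intro TS_sum) (auto simp: jkb letters_def idx_def intro!: TS.tens fgen_Fr)
  finally show ?thesis .
qed

lemma dword_TS: "set w \<subseteq> letters M \<Longrightarrow> dword M w \<in> TS M"
  by (induction w) (auto intro: TS.tens TS_mul dletter_TS)

lemma fDelta_TS: "f \<in> Fr M \<Longrightarrow> fDelta M f \<in> TS M"
  unfolding fDelta_def by (rule TS_sum) (auto simp: Fr_def dword_TS)

lemma fDelta_I:
  assumes RFr: "R \<subseteq> Fr M" and G0: "\<And>r. r \<in> R \<Longrightarrow> fDelta M r \<in> tIdeal M (starIdeal M R)"
  shows "a \<in> starIdeal M R \<Longrightarrow> fDelta M a \<in> tIdeal M (starIdeal M R)"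
proof (induction rule: starIdeal.induct)
  case (gen r) then show ?case by (rule G0)
next
  case zero then show ?case by (simp add: fDelta_fzero tIdeal.zero)
next
  case (add a b) then show ?case
    by (simp add: fDelta_fadd I_Fr[OF RFr] tIdeal.add)
next
  case (scale a c) then show ?case
    by (simp add: fDelta_fscale I_Fr[OF RFr] tIdeal.scale)
next
  case (lmul x a) then show ?case
    by (simp add: fDelta_fmul I_Fr[OF RFr] TS_tI_mul[OF RFr] fDelta_TS)
next
  case (rmul a x) then show ?case
    by (simp add: fDelta_fmul I_Fr[OF RFr] tI_TS_mul[OF RFr] fDelta_TS)
next
  case (star a) then show ?case
    by (simp add: fDelta_fstar I_Fr[OF RFr] tI_star[OF RFr])
qed

lemma tcls_eq:
  assumes "tsub t t' \<in> tIdeal M I" shows "tcls M I t = tcls M I t'"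
proof -
  have "tsub t s \<in> tIdeal M I \<longleftrightarrow> tsub t' s \<in> tIdeal M I" for s
  proof
    assume "tsub t s \<in> tIdeal M I"
    moreover have "tsub t' s = tadd (tsub t s) (tscale (-1) (tsub t t'))"
      by (simp add: tsub_def tadd_def tscale_def fun_eq_iff)
    ultimately show "tsub t' s \<in> tIdeal M I" using assms by (simp add: tIdeal.add tIdeal.scale)
  next
    assume "tsub t' s \<in> tIdeal M I"
    moreover have "tsub t s = tadd (tsub t t') (tsub t' s)"
      by (simp add: tsub_def tadd_def fun_eq_iff)
    ultimately show "tsub t s \<in> tIdeal M I" using assms by (simp add: tIdeal.add)
  qed
  then show ?thesis by (simp add: tcls_def)
qed

lemma qDelta_cls:
  assumes RFr: "R \<subseteq> Fr M" and gen: "\<And>r. r \<in> R \<Longrightarrow> fDelta M r \<in> tIdeal M (starIdeal M R)"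
    and p: "p \<in> Fr M"
  shows "qDelta M (starIdeal M R) (cls M (starIdeal M R) p) = tcls M (starIdeal M R) (fDelta M p)"
proof -
  have "tcls M (starIdeal M R) (fDelta M q) = tcls M (starIdeal M R) (fDelta M p)"
    if q: "q \<in> cls M (starIdeal M R) p" for q
  proof (rule tcls_eq)
    have q1: "q \<in> Fr M" "fsub p q \<in> starIdeal M R" using q by (auto simp: cls_def)
    have "tsub (fDelta M q) (fDelta M p) = tscale (-1) (fDelta M (fsub p q))"
      using p q1 by (simp add: fsub_eq fDelta_fadd fDelta_fscale tsub_def tadd_def tscale_def fun_eq_iff)
    then show "tsub (fDelta M q) (fDelta M p) \<in> tIdeal M (starIdeal M R)"
      using fDelta_I[OF RFr gen q1(2)] by (simp add: tIdeal.scale)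
  qed
  then have "qDelta M (starIdeal M R) (cls M (starIdeal M R) p) = (\<Union>q\<in>cls M (starIdeal M R) p. tcls M (starIdeal M R) (fDelta M p))"
    unfolding qDelta_def by (rule SUP_cong[OF refl])
  then show ?thesis using cls_mem[OF RFr p] by auto
qed


definition inF :: "nat \<Rightarrow> nc \<Rightarrow> bool" where "inF M a \<longleftrightarrow> un a \<in> Fr M"

lemma inF_simps[simp]:
  "inF M 0" "inF M 1"
  "inF M a \<Longrightarrow> inF M b \<Longrightarrow> inF M (a + b)"
  "inF M a \<Longrightarrow> inF M b \<Longrightarrow> inF M (a - b)"
  "inF M a \<Longrightarrow> inF M b \<Longrightarrow> inF M (a * b)"
  "inF M a \<Longrightarrow> inF M (- a)"
  "inF M (cs c)"
  "j \<in> idx M \<Longrightarrow> k \<in> idx M \<Longrightarrow> inF M (G bb j k)"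
  "inF M a \<Longrightarrow> inF M (nstar a)"
  by (simp_all add: inF_def un_0 un_1 un_plus un_minus un_times un_uminus cs_def G_Fr nstar_def)

lemma inF_sum[simp]: "finite S \<Longrightarrow> (\<And>i. i \<in> S \<Longrightarrow> inF M (F i)) \<Longrightarrow> inF M (\<Sum>i\<in>S. F i)"
  by (induction S rule: finite_induct) simp_all

lemma inF_if[simp]: "inF M a \<Longrightarrow> inF M b \<Longrightarrow> inF M (if P then a else b)" by simp

lemma finite_idx[simp]: "finite (idx M)" by (simp add: idx_def)

definition TI :: "nat \<Rightarrow> el set \<Rightarrow> tn set" where "TI M I = TN ` tIdeal M I"

lemma TI_iff: "TN t \<in> TI M I \<longleftrightarrow> t \<in> tIdeal M I"
  by (auto simp: TI_def)

lemma TI_0[simp]: "0 \<in> TI M I" by (simp add: TI_def zero_tn_def tIdeal.zero)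
lemma TI_add[simp]: "a \<in> TI M I \<Longrightarrow> b \<in> TI M I \<Longrightarrow> a + b \<in> TI M I"
  by (auto simp: TI_def plus_tn_def intro: tIdeal.add)
lemma TI_uminus[simp]: "a \<in> TI M I \<Longrightarrow> - a \<in> TI M I"
  by (auto simp: TI_def uminus_tn_def intro: tIdeal.scale)
lemma TI_diff[simp]: "a \<in> TI M I \<Longrightarrow> b \<in> TI M I \<Longrightarrow> a - b \<in> TI M I"
  using TI_add[of a M I "- b"] by simp
lemma TI_sum[simp]: "finite S \<Longrightarrow> (\<And>i. i \<in> S \<Longrightarrow> F i \<in> TI M I) \<Longrightarrow> (\<Sum>i\<in>S. F i) \<in> TI M I"
  by (induction S rule: finite_induct) simp_all
lemma TI_tens_r: "inF M x \<Longrightarrow> un r \<in> I \<Longrightarrow> tens x r \<in> TI M I"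
  by (auto simp: TI_def tens_def inF_def intro!: tIdeal.right)
lemma TI_tens_l: "inF M x \<Longrightarrow> un r \<in> I \<Longrightarrow> tens r x \<in> TI M I"
  by (auto simp: TI_def tens_def inF_def intro!: tIdeal.left)

definition dlt :: "nat \<Rightarrow> nat \<Rightarrow> nc" where "dlt j k = (if j = k then 1 else 0)"

lemma inF_dlt[simp]: "inF M (dlt j k)" by (simp add: dlt_def)

definition tcs :: "complex \<Rightarrow> tn" where "tcs c = tens (cs c) 1"

lemma Dl_cs: "Dl M (cs c) = tcs c"
proof -
  have "Dl M (cs c) = TN (tscale c (ftens fone fone))"
    by (simp add: Dl_def cs_def fDelta_fscale[OF fone_Fr] fDelta_fone)
  also have "\<dots> = tcs c"
    by (simp add: tcs_def tens_def cs_def un_1 tscale_def ftens_def fscale_def split_beta fun_eq_iff)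
  finally show ?thesis .
qed

lemma Dl_dlt: "Dl M (dlt j k) = tens (dlt j k) 1"
  by (simp add: dlt_def Dl_1 Dl_0 tens_1 tens_0_l)

lemma tens_cs_l: "tens (cs c * a) b = tcs c * tens a b"
  by (simp add: tcs_def tens_mult)
lemma tens_cs_r: "tens a (cs c * b) = tcs c * tens a b"
proof -
  have "tens a (cs c * b) = TN (ftens (un a) (fscale c (un b)))"
    by (simp add: tens_def times_nc_def cs_def fmul_fscale_l fmul_fone_l)
  also have "\<dots> = TN (ftens (fscale c (un a)) (un b))"
    by (simp add: ftens_def fscale_def fun_eq_iff split_beta mult_ac)
  also have "\<dots> = tens (cs c * a) b"
    by (simp add: tens_def times_nc_def cs_def fmul_fscale_l fmul_fone_l)
  finally show ?thesis by (simp add: tens_cs_l)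
qed
lemma tcs_mult: "tcs a * tcs b = tcs (a * b)"
  by (simp add: tcs_def tens_mult cs_mult)

section \<open>Delta of the unitarity relations\<close>

definition R1 :: "nat \<Rightarrow> bool \<Rightarrow> bool \<Rightarrow> nat \<Rightarrow> nat \<Rightarrow> nc" where
  "R1 M b1 b2 j k = (\<Sum>l\<in>idx M. G b1 j l * G b2 k l) - dlt j k"
definition R2 :: "nat \<Rightarrow> bool \<Rightarrow> bool \<Rightarrow> nat \<Rightarrow> nat \<Rightarrow> nc" where
  "R2 M b1 b2 j k = (\<Sum>l\<in>idx M. G b1 l j * G b2 l k) - dlt j k"

lemma inF_R1[simp]: "j \<in> idx M \<Longrightarrow> k \<in> idx M \<Longrightarrow> inF M (R1 M b1 b2 j k)" by (simp add: R1_def)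
lemma inF_R2[simp]: "j \<in> idx M \<Longrightarrow> k \<in> idx M \<Longrightarrow> inF M (R2 M b1 b2 j k)" by (simp add: R2_def)

lemma sum_dlt_r: "a \<in> S \<Longrightarrow> finite S \<Longrightarrow> (\<Sum>c\<in>S. tens (X c) (dlt a c)) = tens (X a) 1"
proof -
  assume a: "a \<in> S" "finite S"
  have "(\<Sum>c\<in>S. tens (X c) (dlt a c)) = (\<Sum>c\<in>S. if a = c then tens (X c) 1 else 0)"
    by (rule sum.cong) (auto simp: dlt_def tens_0_r)
  then show ?thesis using a by simp
qed

lemma sum_dlt_l: "a \<in> S \<Longrightarrow> finite S \<Longrightarrow> (\<Sum>c\<in>S. tens (dlt a c) (X c)) = tens 1 (X a)"
proof -
  assume a: "a \<in> S" "finite S"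
  have "(\<Sum>c\<in>S. tens (dlt a c) (X c)) = (\<Sum>c\<in>S. if a = c then tens 1 (X c) else 0)"
    by (rule sum.cong) (auto simp: dlt_def tens_0_l)
  then show ?thesis using a by simp
qed

lemma sum_swap3: "(\<Sum>l\<in>I. \<Sum>a\<in>A. \<Sum>c\<in>C. F l a c) = (\<Sum>a\<in>A. \<Sum>c\<in>C. \<Sum>l\<in>I. F l a c)"
  by (subst sum.swap) (rule sum.cong[OF refl], rule sum.swap)

lemma Dl_R1:
  assumes j: "j \<in> idx M" and k: "k \<in> idx M"
  shows "Dl M (R1 M b1 b2 j k) =
    (\<Sum>a\<in>idx M. \<Sum>c\<in>idx M. tens (G b1 j a * G b2 k c) (R1 M b1 b2 a c)) + tens (R1 M b1 b2 j k) 1"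
proof -
  let ?X = "\<lambda>a c. G b1 j a * G b2 k c"
  have "Dl M (\<Sum>l\<in>idx M. G b1 j l * G b2 k l) = (\<Sum>l\<in>idx M. Dl M (G b1 j l) * Dl M (G b2 k l))"
    using j k by (simp add: Dl_sum Dl_mult inF_def[symmetric])
  also have "\<dots> = (\<Sum>l\<in>idx M. \<Sum>a\<in>idx M. \<Sum>c\<in>idx M. tens (?X a c) (G b1 a l * G b2 c l))"
    by (simp add: Dl_G sum_distrib_left sum_distrib_right tens_mult) (rule sum.cong[OF refl], rule sum.swap)
  also have "\<dots> = (\<Sum>a\<in>idx M. \<Sum>c\<in>idx M. tens (?X a c) (\<Sum>l\<in>idx M. G b1 a l * G b2 c l))"
    by (subst sum_swap3) (simp only: tens_sum_r)
  also have "\<dots> = (\<Sum>a\<in>idx M. \<Sum>c\<in>idx M. tens (?X a c) (R1 M b1 b2 a c) + tens (?X a c) (dlt a c))"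
    by (simp add: R1_def tens_add_r[symmetric])
  also have "\<dots> = (\<Sum>a\<in>idx M. \<Sum>c\<in>idx M. tens (?X a c) (R1 M b1 b2 a c)) + (\<Sum>a\<in>idx M. tens (?X a a) 1)"
    by (simp add: sum.distrib sum_dlt_r)
  also have "(\<Sum>a\<in>idx M. tens (?X a a) 1) = tens (R1 M b1 b2 j k) 1 + tens (dlt j k) 1"
    by (simp add: tens_sum_l[symmetric] tens_add_l[symmetric] R1_def)
  finally have e: "Dl M (\<Sum>l\<in>idx M. G b1 j l * G b2 k l) =
     (\<Sum>a\<in>idx M. \<Sum>c\<in>idx M. tens (?X a c) (R1 M b1 b2 a c)) + tens (R1 M b1 b2 j k) 1 + tens (dlt j k) 1"
    by (simp add: add.assoc)
  show ?thesis
    unfolding R1_def[of M b1 b2 j k]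
    by (subst Dl_diff) (simp_all add: inF_def[symmetric] j k e Dl_dlt R1_def)
qed

lemma Dl_R2:
  assumes j: "j \<in> idx M" and k: "k \<in> idx M"
  shows "Dl M (R2 M b1 b2 j k) =
    (\<Sum>a\<in>idx M. \<Sum>c\<in>idx M. tens (R2 M b1 b2 a c) (G b1 a j * G b2 c k)) + tens 1 (R2 M b1 b2 j k)"
proof -
  let ?Y = "\<lambda>a c. G b1 a j * G b2 c k"
  have "Dl M (\<Sum>l\<in>idx M. G b1 l j * G b2 l k) = (\<Sum>l\<in>idx M. Dl M (G b1 l j) * Dl M (G b2 l k))"
    using j k by (simp add: Dl_sum Dl_mult inF_def[symmetric])
  also have "\<dots> = (\<Sum>l\<in>idx M. \<Sum>a\<in>idx M. \<Sum>c\<in>idx M. tens (G b1 l a * G b2 l c) (?Y a c))"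
    by (simp add: Dl_G sum_distrib_left sum_distrib_right tens_mult) (rule sum.cong[OF refl], rule sum.swap)
  also have "\<dots> = (\<Sum>a\<in>idx M. \<Sum>c\<in>idx M. tens (\<Sum>l\<in>idx M. G b1 l a * G b2 l c) (?Y a c))"
    by (subst sum_swap3) (simp only: tens_sum_l)
  also have "\<dots> = (\<Sum>a\<in>idx M. \<Sum>c\<in>idx M. tens (R2 M b1 b2 a c) (?Y a c) + tens (dlt a c) (?Y a c))"
    by (simp add: R2_def tens_add_l[symmetric])
  also have "\<dots> = (\<Sum>a\<in>idx M. \<Sum>c\<in>idx M. tens (R2 M b1 b2 a c) (?Y a c)) + (\<Sum>a\<in>idx M. tens 1 (?Y a a))"
    by (simp add: sum.distrib sum_dlt_l)
  also have "(\<Sum>a\<in>idx M. tens 1 (?Y a a)) = tens 1 (R2 M b1 b2 j k) + tens 1 (dlt j k)"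
    by (simp add: tens_sum_r[symmetric] tens_add_r[symmetric] R2_def)
  finally have e: "Dl M (\<Sum>l\<in>idx M. G b1 l j * G b2 l k) =
     (\<Sum>a\<in>idx M. \<Sum>c\<in>idx M. tens (R2 M b1 b2 a c) (?Y a c)) + tens 1 (R2 M b1 b2 j k) + tens 1 (dlt j k)"
    by (simp add: add.assoc)
  have d: "tens 1 (dlt j k) = tens (dlt j k) 1" by (simp add: dlt_def tens_0_l tens_0_r)
  show ?thesis
    unfolding R2_def[of M b1 b2 j k]
    by (subst Dl_diff) (simp_all add: inF_def[symmetric] j k e Dl_dlt d R2_def)
qed

lemma Dl_R1_TI:
  assumes "\<And>a c. a \<in> idx M \<Longrightarrow> c \<in> idx M \<Longrightarrow> un (R1 M b1 b2 a c) \<in> I"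
    and "j \<in> idx M" "k \<in> idx M"
  shows "Dl M (R1 M b1 b2 j k) \<in> TI M I"
  using assms by (simp add: Dl_R1 TI_tens_r TI_tens_l)

lemma Dl_R2_TI:
  assumes "\<And>a c. a \<in> idx M \<Longrightarrow> c \<in> idx M \<Longrightarrow> un (R2 M b1 b2 a c) \<in> I"
    and "j \<in> idx M" "k \<in> idx M"
  shows "Dl M (R2 M b1 b2 j k) \<in> TI M I"
  using assms by (simp add: Dl_R2 TI_tens_r TI_tens_l)


section \<open>The J relation\<close>

definition sig :: "nat \<Rightarrow> nat \<Rightarrow> nat" where "sig M j = (if j \<le> M then j + M else j - M)"
definition sg :: "nat \<Rightarrow> nat \<Rightarrow> complex" where "sg M j = (if j \<le> M then 1 else -1)"

lemma sig_idx: "j \<in> idx M \<Longrightarrow> sig M j \<in> idx M" by (auto simp: sig_def idx_def)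
lemma sig_sig: "j \<in> idx M \<Longrightarrow> sig M (sig M j) = j" by (auto simp: sig_def idx_def)
lemma sg_sq: "sg M j * sg M j = 1" by (simp add: sg_def)
lemma sig_bij: "bij_betw (sig M) (idx M) (idx M)"
  by (rule bij_betw_byWitness[where f' = "sig M"]) (auto simp: sig_idx sig_sig)

lemma Jm_eq: "j \<in> idx M \<Longrightarrow> a \<in> idx M \<Longrightarrow> Jm M j a = (if a = sig M j then sg M j else 0)"
  by (auto simp: Jm_def sig_def sg_def idx_def)

definition RJ :: "nat \<Rightarrow> nat \<Rightarrow> nat \<Rightarrow> nc" where
  "RJ M j k = G False j k - cs (sg M j * sg M k) * G True (sig M j) (sig M k)"

lemma inF_RJ[simp]: "j \<in> idx M \<Longrightarrow> k \<in> idx M \<Longrightarrow> inF M (RJ M j k)"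
  by (simp add: RJ_def sig_idx)

lemma NC_u: "NC (u j k) = G False j k" by (simp add: u_def G_def)
lemma NC_us: "NC (us j k) = G True j k" by (simp add: us_def G_def)
lemma cs_delta: "cs (delta j k) = dlt j k" by (simp add: delta_def dlt_def)

lemma NC_Jterm:
  assumes j: "j \<in> idx M" and k: "k \<in> idx M" and ab: "a \<in> idx M" "b \<in> idx M"
  shows "NC (fscale (Jm M j a * Jinv M b k) (us a b)) =
     (if (a,b) = (sig M j, sig M k) then cs (sg M j * sg M k) * G True (sig M j) (sig M k) else 0)"
  using j k ab by (cases "a = sig M j"; cases "b = sig M k") (simp_all add: NC_fscale NC_us Jinv_def Jm_eq)

lemma NC_relJ:
  assumes j: "j \<in> idx M" and k: "k \<in> idx M"
  shows "NC (fsub (u j k) (fsumset (idx M \<times> idx M) (\<lambda>(a,b). fscale (Jm M j a * Jinv M b k) (us a b)))) = RJ M j k"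
proof -
  have "NC (fsumset (idx M \<times> idx M) (\<lambda>(a,b). fscale (Jm M j a * Jinv M b k) (us a b)))
      = (\<Sum>p\<in>idx M \<times> idx M. NC ((\<lambda>(a,b). fscale (Jm M j a * Jinv M b k) (us a b)) p))"
    by (rule NC_fsumset)
  also have "\<dots> = (\<Sum>p\<in>idx M \<times> idx M. if p = (sig M j, sig M k) then cs (sg M j * sg M k) * G True (sig M j) (sig M k) else 0)"
    by (rule sum.cong) (auto simp: NC_Jterm j k split: if_splits)
  also have "\<dots> = cs (sg M j * sg M k) * G True (sig M j) (sig M k)"
    using j k by (simp add: sig_idx)
  finally show ?thesis by (simp add: NC_fsub NC_u RJ_def)
qed

lemma Dl_G_sig:
  assumes j: "j \<in> idx M" and k: "k \<in> idx M"
  shows "(\<Sum>l\<in>idx M. tens (G True (sig M j) (sig M l)) (G True (sig M l) (sig M k))) = Dl M (G True (sig M j) (sig M k))"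
  unfolding Dl_G
  by (rule sum.reindex_bij_betw[OF sig_bij, where g = "\<lambda>l. tens (G True (sig M j) l) (G True l (sig M k))"])

lemma Dl_RJ:
  assumes j: "j \<in> idx M" and k: "k \<in> idx M"
  shows "Dl M (RJ M j k) = (\<Sum>l\<in>idx M. tens (RJ M j l) (G False l k))
            + (\<Sum>l\<in>idx M. tens (cs (sg M j * sg M l) * G True (sig M j) (sig M l)) (RJ M l k))"
proof -
  let ?A = "\<lambda>l. cs (sg M j * sg M l) * G True (sig M j) (sig M l)"
  let ?B = "\<lambda>l. cs (sg M l * sg M k) * G True (sig M l) (sig M k)"
  let ?c = "sg M j * sg M k"
  have e1: "tens (G False j l) (G False l k) =
      tens (RJ M j l) (G False l k) + tens (?A l) (RJ M l k)
      + tcs ?c * tens (G True (sig M j) (sig M l)) (G True (sig M l) (sig M k))" for l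
  proof -
    have g1: "G False j l = RJ M j l + ?A l" by (simp add: RJ_def)
    have g2: "G False l k = RJ M l k + ?B l" by (simp add: RJ_def)
    have "sg M l * sg M k * (sg M j * sg M l) = ?c"
      by (auto simp: sg_def)
    then have cc: "tcs (sg M l * sg M k) * tcs (sg M j * sg M l) = tcs ?c"
      by (simp only: tcs_mult)
    have "tens (?A l) (?B l) = tcs (sg M l * sg M k) * (tcs (sg M j * sg M l) * tens (G True (sig M j) (sig M l)) (G True (sig M l) (sig M k)))"
      by (simp only: tens_cs_l tens_cs_r)
    then have t: "tens (?A l) (?B l) = tcs ?c * tens (G True (sig M j) (sig M l)) (G True (sig M l) (sig M k))"
      by (simp only: mult.assoc[symmetric] cc)
    have "tens (G False j l) (G False l k) = tens (RJ M j l) (G False l k) + tens (?A l) (G False l k)"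
      by (subst g1) (simp add: tens_add_l)
    also have "tens (?A l) (G False l k) = tens (?A l) (RJ M l k) + tens (?A l) (?B l)"
      by (subst g2) (simp add: tens_add_r)
    finally show ?thesis by (simp add: t add.assoc)
  qed
  have "Dl M (G False j k) = (\<Sum>l\<in>idx M. tens (RJ M j l) (G False l k)) + (\<Sum>l\<in>idx M. tens (?A l) (RJ M l k))
       + tcs ?c * Dl M (G True (sig M j) (sig M k))"
  proof -
    have s: "(\<Sum>l\<in>idx M. tcs ?c * tens (G True (sig M j) (sig M l)) (G True (sig M l) (sig M k)))
        = tcs ?c * Dl M (G True (sig M j) (sig M k))"
      by (simp only: sum_distrib_left[symmetric] Dl_G_sig[OF j k])
    show ?thesis by (simp only: Dl_G[of M False j k] e1 sum.distrib s)
  qed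
  moreover have "Dl M (cs ?c * G True (sig M j) (sig M k)) = tcs ?c * Dl M (G True (sig M j) (sig M k))"
    using j k by (simp add: Dl_mult inF_def[symmetric] sig_idx Dl_cs)
  ultimately show ?thesis
    unfolding RJ_def[of M j k]
    by (subst Dl_diff) (simp_all add: inF_def[symmetric] j k sig_idx)
qed

lemma Dl_RJ_TI:
  assumes "\<And>a c. a \<in> idx M \<Longrightarrow> c \<in> idx M \<Longrightarrow> un (RJ M a c) \<in> I"
    and "j \<in> idx M" "k \<in> idx M"
  shows "Dl M (RJ M j k) \<in> TI M I"
  using assms by (simp add: Dl_RJ TI_tens_r TI_tens_l sig_idx)

lemma NC_relU1: "NC (fsub (fsumset (idx M) (\<lambda>l. fmul (u j l) (us k l))) (fscale (delta j k) fone)) = R1 M False True j k"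
  by (simp add: NC_fsub NC_fsumset NC_fmul NC_fscale NC_fone NC_u NC_us cs_delta R1_def)
lemma NC_relU2: "NC (fsub (fsumset (idx M) (\<lambda>l. fmul (us l j) (u l k))) (fscale (delta j k) fone)) = R2 M True False j k"
  by (simp add: NC_fsub NC_fsumset NC_fmul NC_fscale NC_fone NC_u NC_us cs_delta R2_def)
lemma NC_relB1: "NC (fsub (fsumset (idx M) (\<lambda>l. fmul (us j l) (u k l))) (fscale (delta j k) fone)) = R1 M True False j k"
  by (simp add: NC_fsub NC_fsumset NC_fmul NC_fscale NC_fone NC_u NC_us cs_delta R1_def)
lemma NC_relB2: "NC (fsub (fsumset (idx M) (\<lambda>l. fmul (u l j) (us l k))) (fscale (delta j k) fone)) = R2 M False True j k"
  by (simp add: NC_fsub NC_fsumset NC_fmul NC_fscale NC_fone NC_u NC_us cs_delta R2_def)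

lemma un_NC: "un (NC x) = x" by simp
lemma NC_un: "NC (un a) = a" by simp

lemma relU1_un: "un (R1 M False True j k) = fsub (fsumset (idx M) (\<lambda>l. fmul (u j l) (us k l))) (fscale (delta j k) fone)"
  by (simp only: NC_relU1[symmetric] nc.sel)
lemma relU2_un: "un (R2 M True False j k) = fsub (fsumset (idx M) (\<lambda>l. fmul (us l j) (u l k))) (fscale (delta j k) fone)"
  by (simp only: NC_relU2[symmetric] nc.sel)
lemma relB1_un: "un (R1 M True False j k) = fsub (fsumset (idx M) (\<lambda>l. fmul (us j l) (u k l))) (fscale (delta j k) fone)"
  by (simp only: NC_relB1[symmetric] nc.sel)
lemma relB2_un: "un (R2 M False True j k) = fsub (fsumset (idx M) (\<lambda>l. fmul (u l j) (us l k))) (fscale (delta j k) fone)"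
  by (simp only: NC_relB2[symmetric] nc.sel)
lemma relJ_un: "j \<in> idx M \<Longrightarrow> k \<in> idx M \<Longrightarrow>
  un (RJ M j k) = fsub (u j k) (fsumset (idx M \<times> idx M) (\<lambda>(a,b). fscale (Jm M j a * Jinv M b k) (us a b)))"
  by (simp only: NC_relJ[symmetric] nc.sel)

lemma relU_cases:
  "r \<in> relU M \<Longrightarrow> \<exists>j\<in>idx M. \<exists>k\<in>idx M. r = un (R1 M False True j k) \<or> r = un (R2 M True False j k)
      \<or> r = un (R1 M True False j k) \<or> r = un (R2 M False True j k)"
  unfolding relU_def relUnitary_def relUbarUnitary_def relU1_un relU2_un relB1_un relB2_un
  by blast

lemma relO_cases:
  assumes r: "r \<in> relO M"
  shows "\<exists>j\<in>idx M. \<exists>k\<in>idx M. r = un (R1 M False True j k) \<or> r = un (R2 M True False j k)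
      \<or> r = un (RJ M j k)"
proof -
  from r have "r \<in> relUnitary M \<or> r \<in> relJ M" by (simp add: relO_def)
  then show ?thesis
  proof
    assume "r \<in> relUnitary M" then show ?thesis
      unfolding relUnitary_def relU1_un relU2_un by blast
  next
    assume "r \<in> relJ M"
    then obtain j k where jk: "j \<in> idx M" "k \<in> idx M"
      "r = fsub (u j k) (fsumset (idx M \<times> idx M) (\<lambda>(a,b). fscale (Jm M j a * Jinv M b k) (us a b)))"
      unfolding relJ_def by blast
    then have "r = un (RJ M j k)" by (simp add: relJ_un)
    with jk show ?thesis by blast
  qed
qed

lemma relU_mem:
  assumes "j \<in> idx M" "k \<in> idx M"
  shows "un (R1 M False True j k) \<in> relU M" "un (R2 M True False j k) \<in> relU M"
        "un (R1 M True False j k) \<in> relU M" "un (R2 M False True j k) \<in> relU M"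
  unfolding relU_def relUnitary_def relUbarUnitary_def relU1_un relU2_un relB1_un relB2_un
  using assms by blast+

lemma relO_mem:
  assumes "j \<in> idx M" "k \<in> idx M"
  shows "un (R1 M False True j k) \<in> relO M" "un (R2 M True False j k) \<in> relO M"
        "un (RJ M j k) \<in> relO M"
  unfolding relO_def relUnitary_def relJ_def relU1_un relU2_un relJ_un[OF assms]
  using assms by blast+

lemma relU_Fr: "relU M \<subseteq> Fr M"
proof
  fix r assume "r \<in> relU M"
  from relU_cases[OF this] obtain j k where jk: "j \<in> idx M" "k \<in> idx M"
    "r = un (R1 M False True j k) \<or> r = un (R2 M True False j k) \<or> r = un (R1 M True False j k) \<or> r = un (R2 M False True j k)"
    by blast
  from jk(3) show "r \<in> Fr M" by (elim disjE) (simp_all add: inF_def[symmetric] jk(1,2))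
qed
lemma relO_Fr: "relO M \<subseteq> Fr M"
proof
  fix r assume "r \<in> relO M"
  from relO_cases[OF this] obtain j k where jk: "j \<in> idx M" "k \<in> idx M"
    "r = un (R1 M False True j k) \<or> r = un (R2 M True False j k) \<or> r = un (RJ M j k)"
    by blast
  from jk(3) show "r \<in> Fr M" by (elim disjE) (simp_all add: inF_def[symmetric] jk(1,2))
qed

lemma fDelta_TI: "fDelta M r \<in> tIdeal M I \<longleftrightarrow> Dl M (NC r) \<in> TI M I"
  by (simp add: Dl_def TI_iff)

lemma Delta_relU: "r \<in> relU M \<Longrightarrow> fDelta M r \<in> tIdeal M (IU M)"
proof -
  assume r: "r \<in> relU M"
  have mem: "\<And>a c. a \<in> idx M \<Longrightarrow> c \<in> idx M \<Longrightarrow>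
     un (R1 M False True a c) \<in> IU M \<and> un (R2 M True False a c) \<in> IU M \<and>
     un (R1 M True False a c) \<in> IU M \<and> un (R2 M False True a c) \<in> IU M"
    by (simp add: IU_def relU_mem starIdeal.gen)
  from relU_cases[OF r] obtain j k where jk: "j \<in> idx M" "k \<in> idx M"
    "r = un (R1 M False True j k) \<or> r = un (R2 M True False j k) \<or> r = un (R1 M True False j k) \<or> r = un (R2 M False True j k)"
    by blast
  then show ?thesis
    unfolding fDelta_TI using mem
    by (elim disjE) (simp_all add: Dl_R1_TI[of M] Dl_R2_TI[of M])
qed

lemma Delta_relO: "r \<in> relO M \<Longrightarrow> fDelta M r \<in> tIdeal M (IO M)"
proof -
  assume r: "r \<in> relO M"
  have mem: "\<And>a c. a \<in> idx M \<Longrightarrow> c \<in> idx M \<Longrightarrow>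
     un (R1 M False True a c) \<in> IO M \<and> un (R2 M True False a c) \<in> IO M \<and> un (RJ M a c) \<in> IO M"
    by (simp add: IO_def relO_mem starIdeal.gen)
  from relO_cases[OF r] obtain j k where jk: "j \<in> idx M" "k \<in> idx M"
    "r = un (R1 M False True j k) \<or> r = un (R2 M True False j k) \<or> r = un (RJ M j k)"
    by blast
  then show ?thesis
    unfolding fDelta_TI using mem
    by (elim disjE) (simp_all add: Dl_R1_TI Dl_R2_TI Dl_RJ_TI)
qed


definition inI :: "el set \<Rightarrow> nc \<Rightarrow> bool" where "inI I a \<longleftrightarrow> un a \<in> I"

context
  fixes M :: nat and R :: "el set"
  assumes RFr: "R \<subseteq> Fr M"
begin

lemma inI_simps:
  "inI (starIdeal M R) 0"
  "inI (starIdeal M R) a \<Longrightarrow> inI (starIdeal M R) b \<Longrightarrow> inI (starIdeal M R) (a + b)"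
  "inI (starIdeal M R) a \<Longrightarrow> inI (starIdeal M R) b \<Longrightarrow> inI (starIdeal M R) (a - b)"
  "inI (starIdeal M R) a \<Longrightarrow> inI (starIdeal M R) (- a)"
  "inF M x \<Longrightarrow> inI (starIdeal M R) a \<Longrightarrow> inI (starIdeal M R) (x * a)"
  "inF M x \<Longrightarrow> inI (starIdeal M R) a \<Longrightarrow> inI (starIdeal M R) (a * x)"
  "inI (starIdeal M R) a \<Longrightarrow> inI (starIdeal M R) (nstar a)"
  by (auto simp: inI_def inF_def un_0 un_plus un_minus un_uminus un_times nstar_def
      intro: starIdeal.zero starIdeal.add I_sub[OF RFr] starIdeal.scale starIdeal.lmul starIdeal.rmul starIdeal.star)

lemma inI_sum: "finite S \<Longrightarrow> (\<And>i. i \<in> S \<Longrightarrow> inI (starIdeal M R) (F i)) \<Longrightarrow> inI (starIdeal M R) (\<Sum>i\<in>S. F i)"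
  by (induction S rule: finite_induct) (simp_all add: inI_simps)

lemma inI_inF: "inI (starIdeal M R) a \<Longrightarrow> inF M a"
  by (simp add: inI_def inF_def I_Fr[OF RFr])

end

lemma nstar_G: "nstar (G b j k) = G (\<not> b) j k"
  by (simp add: nstar_def G_def fstar_fgen)
lemma nstar_cs: "nstar (cs c) = cs (cnj c)"
  by (simp add: nstar_def cs_def fstar_fscale fstar_rho fun_eq_iff fone_def rho_def fscale_def)
lemma nstar_uminus: "nstar (- a) = - nstar a"
  by (simp add: nstar_def uminus_nc_def fstar_fscale)
lemma cnj_sg: "cnj (sg M j) = sg M j" by (simp add: sg_def)

lemma nstar_RJ: "nstar (RJ M j k) = G True j k - G False (sig M j) (sig M k) * cs (sg M j * sg M k)"
  by (simp add: RJ_def nstar_diff nstar_mult nstar_G nstar_cs cnj_sg)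

lemma cs_comm2: "x * (cs c * y) = cs c * (x * y)"
  by (metis cs_comm mult.assoc)

lemma cs_pair: "(cs a * P) * (cs b * Q) = (cs a * cs b) * (P * Q)"
  by (metis cs_comm2 mult.assoc)

lemma cs_sgsg: "cs (sg M j * sg M l) * cs (sg M k * sg M l) = cs (sg M j * sg M k)"
  by (simp add: cs_mult[symmetric]) (auto simp: sg_def)

lemma GT_exp: "G True j l = nstar (RJ M j l) + cs (sg M j * sg M l) * G False (sig M j) (sig M l)"
  by (simp add: nstar_RJ cs_comm)
lemma GF_exp: "G False k l = RJ M k l + cs (sg M k * sg M l) * G True (sig M k) (sig M l)"
  by (simp add: RJ_def)

lemma R1TF_eq:
  assumes j: "j \<in> idx M" and k: "k \<in> idx M"
  shows "R1 M True False j k =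
    (\<Sum>l\<in>idx M. nstar (RJ M j l) * G False k l + (cs (sg M j * sg M l) * G False (sig M j) (sig M l)) * RJ M k l)
    + cs (sg M j * sg M k) * R1 M False True (sig M j) (sig M k)"
proof -
  let ?c = "cs (sg M j * sg M k)"
  have t: "G True j l * G False k l = nstar (RJ M j l) * G False k l + (cs (sg M j * sg M l) * G False (sig M j) (sig M l)) * RJ M k l
      + ?c * (G False (sig M j) (sig M l) * G True (sig M k) (sig M l))" for l
  proof -
    have "G True j l * G False k l = nstar (RJ M j l) * G False k l + (cs (sg M j * sg M l) * G False (sig M j) (sig M l)) * G False k l"
      by (subst GT_exp) (simp add: distrib_right)
    also have "(cs (sg M j * sg M l) * G False (sig M j) (sig M l)) * G False k l =
       (cs (sg M j * sg M l) * G False (sig M j) (sig M l)) * RJ M k l +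
       (cs (sg M j * sg M l) * G False (sig M j) (sig M l)) * (cs (sg M k * sg M l) * G True (sig M k) (sig M l))"
      by (subst GF_exp) (simp add: distrib_left)
    also have "(cs (sg M j * sg M l) * G False (sig M j) (sig M l)) * (cs (sg M k * sg M l) * G True (sig M k) (sig M l))
       = ?c * (G False (sig M j) (sig M l) * G True (sig M k) (sig M l))"
      by (simp only: cs_pair cs_sgsg)
    finally show ?thesis by (simp add: add.assoc)
  qed
  have r: "(\<Sum>l\<in>idx M. G False (sig M j) (sig M l) * G True (sig M k) (sig M l)) = (\<Sum>l\<in>idx M. G False (sig M j) l * G True (sig M k) l)"
    by (rule sum.reindex_bij_betw[OF sig_bij])
  have d: "?c * dlt (sig M j) (sig M k) = dlt j k"
    using j k by (auto simp: dlt_def sg_def cs_mult[symmetric] dest: arg_cong[where f="sig M"] simp: sig_sig)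
  show ?thesis
    unfolding R1_def[of M True False j k] R1_def[of M False True]
    by (simp add: t sum.distrib sum_distrib_left[symmetric] r right_diff_distrib d)
qed

lemma R2FT_eq:
  assumes j: "j \<in> idx M" and k: "k \<in> idx M"
  shows "R2 M False True j k =
    (\<Sum>l\<in>idx M. RJ M l j * G True l k + (cs (sg M l * sg M j) * G True (sig M l) (sig M j)) * nstar (RJ M l k))
    + cs (sg M j * sg M k) * R2 M True False (sig M j) (sig M k)"
proof -
  let ?c = "cs (sg M j * sg M k)"
  have t: "G False l j * G True l k = RJ M l j * G True l k + (cs (sg M l * sg M j) * G True (sig M l) (sig M j)) * nstar (RJ M l k)
      + ?c * (G True (sig M l) (sig M j) * G False (sig M l) (sig M k))" for l
  proof -
    have "G False l j * G True l k = RJ M l j * G True l k + (cs (sg M l * sg M j) * G True (sig M l) (sig M j)) * G True l k"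
      by (subst GF_exp) (simp add: distrib_right)
    also have "(cs (sg M l * sg M j) * G True (sig M l) (sig M j)) * G True l k =
       (cs (sg M l * sg M j) * G True (sig M l) (sig M j)) * nstar (RJ M l k) +
       (cs (sg M l * sg M j) * G True (sig M l) (sig M j)) * (cs (sg M l * sg M k) * G False (sig M l) (sig M k))"
      by (subst GT_exp) (simp add: distrib_left)
    also have "(cs (sg M l * sg M j) * G True (sig M l) (sig M j)) * (cs (sg M l * sg M k) * G False (sig M l) (sig M k))
       = ?c * (G True (sig M l) (sig M j) * G False (sig M l) (sig M k))"
      by (simp only: cs_pair cs_mult[symmetric]) (auto simp: sg_def)
    finally show ?thesis by (simp add: add.assoc)
  qed
  have r: "(\<Sum>l\<in>idx M. G True (sig M l) (sig M j) * G False (sig M l) (sig M k)) = (\<Sum>l\<in>idx M. G True l (sig M j) * G False l (sig M k))"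
    by (rule sum.reindex_bij_betw[OF sig_bij])
  have d: "?c * dlt (sig M j) (sig M k) = dlt j k"
    using j k by (auto simp: dlt_def sg_def cs_mult[symmetric] dest: arg_cong[where f="sig M"] simp: sig_sig)
  show ?thesis
    unfolding R2_def[of M False True j k] R2_def[of M True False]
    by (simp add: t sum.distrib sum_distrib_left[symmetric] r right_diff_distrib d)
qed

lemma IO_RJ: "a \<in> idx M \<Longrightarrow> c \<in> idx M \<Longrightarrow> inI (IO M) (RJ M a c)"
  by (simp add: inI_def IO_def relO_mem starIdeal.gen)
lemma IO_R1: "a \<in> idx M \<Longrightarrow> c \<in> idx M \<Longrightarrow> inI (IO M) (R1 M False True a c)"
  by (simp add: inI_def IO_def relO_mem starIdeal.gen)
lemma IO_R2: "a \<in> idx M \<Longrightarrow> c \<in> idx M \<Longrightarrow> inI (IO M) (R2 M True False a c)"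
  by (simp add: inI_def IO_def relO_mem starIdeal.gen)

lemmas IO_simps = inI_simps[OF relO_Fr, folded IO_def] inI_sum[OF relO_Fr, folded IO_def]

lemma IO_R1TF: "j \<in> idx M \<Longrightarrow> k \<in> idx M \<Longrightarrow> inI (IO M) (R1 M True False j k)"
  by (simp add: R1TF_eq IO_simps IO_RJ IO_R1 sig_idx)
lemma IO_R2FT: "j \<in> idx M \<Longrightarrow> k \<in> idx M \<Longrightarrow> inI (IO M) (R2 M False True j k)"
  by (simp add: R2FT_eq IO_simps IO_RJ IO_R2 sig_idx)

lemma starIdeal_sub: "a \<in> starIdeal M R \<Longrightarrow> R \<subseteq> starIdeal M R' \<Longrightarrow> a \<in> starIdeal M R'"
  by (induction rule: starIdeal.induct)
     (auto intro: starIdeal.zero starIdeal.add starIdeal.scale starIdeal.lmul starIdeal.rmul starIdeal.star)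

lemma IU_IO: "IU M \<subseteq> IO M"
proof -
  have "relU M \<subseteq> IO M"
  proof
    fix r assume "r \<in> relU M"
    from relU_cases[OF this] obtain j k where jk: "j \<in> idx M" "k \<in> idx M"
      "r = un (R1 M False True j k) \<or> r = un (R2 M True False j k) \<or> r = un (R1 M True False j k) \<or> r = un (R2 M False True j k)"
      by blast
    from jk(3) show "r \<in> IO M"
      using IO_R1[OF jk(1,2)] IO_R2[OF jk(1,2)] IO_R1TF[OF jk(1,2)] IO_R2FT[OF jk(1,2)]
      by (elim disjE) (simp_all add: inI_def)
  qed
  then show ?thesis unfolding IU_def using starIdeal_sub[of _ M "relU M" "relO M"] by (auto simp: IO_def)
qed


section \<open>2x2 matrices over el\<close>

type_synonym mx = "(bool \<times> bool) \<times> word \<Rightarrow> complex"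

definition ent :: "mx \<Rightarrow> bool \<Rightarrow> bool \<Rightarrow> el" where "ent X r c = (\<lambda>w. X ((r,c),w))"

definition mmul :: "mx \<Rightarrow> mx \<Rightarrow> mx" where
  "mmul X Y = (\<lambda>((r,c),w). \<Sum>k\<in>UNIV. fmul (ent X r k) (ent Y k c) w)"
definition mone :: mx where "mone = (\<lambda>((r,c),w). if r = c then fone w else 0)"
definition mst :: "mx \<Rightarrow> mx" where "mst X = (\<lambda>((r,c),w). cnj (X ((c,r), rho w)))"

lemma ent_mmul: "ent (mmul X Y) r c = (\<lambda>w. \<Sum>k\<in>UNIV. fmul (ent X r k) (ent Y k c) w)"
  by (simp add: ent_def mmul_def)

lemma mx_eq: "X = Y \<longleftrightarrow> (\<forall>r c. ent X r c = ent Y r c)"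
  by (auto simp: ent_def fun_eq_iff)

lemma fmul_plus_l: "fmul (\<lambda>v. a v + b v) g = (\<lambda>w. fmul a g w + fmul b g w)"
  using fmul_fadd_l[of a b g] by (simp add: fadd_def)
lemma fmul_plus_r: "fmul g (\<lambda>v. a v + b v) = (\<lambda>w. fmul g a w + fmul g b w)"
  using fmul_fadd_r[of g a b] by (simp add: fadd_def)
lemma fmul_scl_l: "fmul (\<lambda>v. k * a v) g = (\<lambda>w. k * fmul a g w)"
  using fmul_fscale_l[of k a g] by (simp add: fscale_def)
lemma fmul_scl_r: "fmul g (\<lambda>v. k * a v) = (\<lambda>w. k * fmul g a w)"
  using fmul_fscale_r[of g k a] by (simp add: fscale_def)
lemma fmul_zero_l: "fmul (\<lambda>v. 0) g = (\<lambda>w. 0)"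
  using fmul_scl_l[of 0 g g] by simp
lemma fmul_zero_r: "fmul g (\<lambda>v. 0) = (\<lambda>w. 0)"
  using fmul_scl_r[of g 0 g] by simp

lemma UNIV_bool_sum: "(\<Sum>k\<in>(UNIV::bool set). f k) = f False + f True"
  by (simp add: UNIV_bool)

lemma fmul_cnj: "cnj (fmul f g (rev (map flipl w))) = fmul (\<lambda>w. cnj (g (rev (map flipl w)))) (\<lambda>w. cnj (f (rev (map flipl w)))) w"
  using fstar_fmul[of f g] unfolding fstar_def by (simp add: fun_eq_iff)

interpretation MX: ncsalg mmul mone mst
proof
  fix a b c g :: mx and k :: complex
  show "mmul (mmul a b) c = mmul a (mmul b c)"
    unfolding mx_eq ent_mmul
    by (simp add: UNIV_bool_sum fmul_plus_l fmul_plus_r fmul_assoc ent_def fun_eq_iff)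
  show "mmul mone a = a"
    unfolding mx_eq ent_mmul
    apply (intro allI, case_tac r)
    by (simp_all add: UNIV_bool_sum ent_def mone_def fmul_fone_l fmul_zero_l fone_eq[symmetric])
  show "mmul a mone = a"
    unfolding mx_eq ent_mmul
    apply (intro allI, case_tac c)
    by (simp_all add: UNIV_bool_sum ent_def mone_def fmul_fone_r fmul_zero_r fone_eq[symmetric])
  show "mmul (\<lambda>x. a x + b x) g = (\<lambda>x. mmul a g x + mmul b g x)"
    by (simp add: mmul_def ent_def fmul_plus_l fun_eq_iff split_beta sum.distrib)
  show "mmul (\<lambda>x. k * a x) g = (\<lambda>x. k * mmul a g x)"
    by (simp add: mmul_def ent_def fmul_scl_l fun_eq_iff split_beta sum_distrib_left)
  show "mmul g (\<lambda>x. a x + b x) = (\<lambda>x. mmul g a x + mmul g b x)"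
    by (simp add: mmul_def ent_def fmul_plus_r fun_eq_iff split_beta sum.distrib)
  show "mmul g (\<lambda>x. k * a x) = (\<lambda>x. k * mmul g a x)"
    by (simp add: mmul_def ent_def fmul_scl_r fun_eq_iff split_beta sum_distrib_left)
  show "mst (\<lambda>x. a x + b x) = (\<lambda>x. mst a x + mst b x)"
    by (simp add: mst_def fun_eq_iff split_beta)
  show "mst (\<lambda>x. k * a x) = (\<lambda>x. cnj k * mst a x)"
    by (simp add: mst_def fun_eq_iff split_beta)
  show "mst (mmul a b) = mmul (mst b) (mst a)"
  proof -
    have e: "ent (mst X) r c = fstar (ent X c r)" for X r c
      by (simp add: ent_def mst_def fstar_rho)
    show ?thesis
      unfolding mx_eq ent_mmul e
      by (simp add: ent_mmul fstar_def fmul_cnj)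
  qed
  show "mst mone = mone"
    by (auto simp: mst_def mone_def fun_eq_iff fone_def rho_def)
qed


definition mk :: "nc \<Rightarrow> nc \<Rightarrow> nc \<Rightarrow> nc \<Rightarrow> mx" where
  "mk A B C D = (\<lambda>((r,c),w). (if r then (if c then un D else un C) else (if c then un B else un A)) w)"

lemma ent_mk: "ent (mk A B C D) r c = (if r then (if c then un D else un C) else (if c then un B else un A))"
  by (auto simp: ent_def mk_def fun_eq_iff)

definition PL :: "nat \<Rightarrow> letter \<Rightarrow> mx" where
  "PL M y = (case y of (j,k,b) \<Rightarrow>
     if b then mk 0 (cs (sg M j * sg M k) * G False (sig M j) (sig M k)) (G True j k) 0
     else mk 0 (G False j k) (cs (sg M j * sg M k) * G True (sig M j) (sig M k)) 0)"

lemma ent_mst: "ent (mst X) r c = fstar (ent X c r)"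
  by (simp add: ent_def mst_def fstar_rho)

lemma un_nstar: "un (nstar a) = fstar (un a)" by (simp add: nstar_def)

lemma mst_mk: "mst (mk A B C D) = mk (nstar A) (nstar C) (nstar B) (nstar D)"
  unfolding mx_eq ent_mst ent_mk by (simp add: un_nstar)

lemma nstar_0: "nstar 0 = 0"
  by (simp add: nstar_def zero_nc_def fstar_rho fzero_def)

lemma PL_flip: "PL M (flipl y) = mst (PL M y)"
proof -
  obtain j k b where y: "y = (j,k,b)" by (cases y)
  show ?thesis
    by (simp add: y PL_def mst_mk nstar_0 nstar_mult nstar_G nstar_cs cnj_sg cs_comm)
qed

definition Pq :: "nat \<Rightarrow> nc \<Rightarrow> bool \<Rightarrow> bool \<Rightarrow> nc" where
  "Pq M a r c = NC (ent (MX.ext (PL M) (un a)) r c)"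

lemma ent_plus: "ent (\<lambda>x. X x + Y x) r c = fadd (ent X r c) (ent Y r c)"
  by (simp add: ent_def fadd_def)
lemma ent_scl: "ent (\<lambda>x. k * X x) r c = fscale k (ent X r c)"
  by (simp add: ent_def fscale_def)

lemma ent_neg: "ent (\<lambda>x. - X x) r c = fscale (-1) (ent X r c)"
  by (simp add: ent_def fscale_def)

lemma inF_fin: "inF M a \<Longrightarrow> finite (supp (un a))" by (simp add: inF_def Fr_fin)

lemma Pq_mult: "inF M a \<Longrightarrow> inF M b \<Longrightarrow> Pq M (a * b) r c = Pq M a r False * Pq M b False c + Pq M a r True * Pq M b True c"
  by (simp add: Pq_def un_times MX.ext_fmul inF_fin ent_mmul UNIV_bool_sum NC_fmul[symmetric] NC_fadd[symmetric] fadd_def)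

lemma Pq_add: "inF M a \<Longrightarrow> inF M b \<Longrightarrow> Pq M (a + b) r c = Pq M a r c + Pq M b r c"
  by (simp add: Pq_def un_plus MX.ext_fadd inF_fin ent_plus NC_fadd)

lemma Pq_uminus: "inF M a \<Longrightarrow> Pq M (- a) r c = - Pq M a r c"
  by (simp add: Pq_def un_uminus MX.ext_fscale inF_fin ent_neg uminus_nc_def)

lemma Pq_diff: "inF M a \<Longrightarrow> inF M b \<Longrightarrow> Pq M (a - b) r c = Pq M a r c - Pq M b r c"
proof -
  assume a: "inF M a" "inF M b"
  have "Pq M (a + - b) r c = Pq M a r c + Pq M (- b) r c" by (rule Pq_add) (simp_all add: a)
  also have "Pq M (- b) r c = - Pq M b r c" by (rule Pq_uminus) (simp add: a)
  finally show ?thesis by simp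
qed

lemma Pq_1: "Pq M 1 r c = (if r = c then 1 else 0)"
  by (simp add: Pq_def un_1 MX.ext_fone ent_def) (auto simp: mone_def one_nc_def zero_nc_def fzero_def)

lemma Pq_0: "Pq M 0 r c = 0"
  by (simp add: Pq_def un_0 MX.ext_fzero ent_def) (simp add: zero_nc_def fzero_def)

lemma Pq_nstar: "inF M a \<Longrightarrow> Pq M (nstar a) r c = nstar (Pq M a c r)"
  by (simp add: Pq_def un_nstar MX.ext_fstar PL_flip inF_fin ent_mst nstar_def)

lemma Pq_G: "Pq M (G b j k) r c = NC (ent (PL M (j,k,b)) r c)"
  by (simp add: Pq_def G_def MX.ext_fgen)

lemma Pq_sum: "finite S \<Longrightarrow> (\<And>i. i \<in> S \<Longrightarrow> inF M (F i)) \<Longrightarrow> Pq M (\<Sum>i\<in>S. F i) r c = (\<Sum>i\<in>S. Pq M (F i) r c)"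
proof (induction S rule: finite_induct)
  case empty then show ?case by (simp add: Pq_0)
next
  case (insert i S) then show ?case by (simp add: Pq_add)
qed

lemma PqGF: "Pq M (G False j k) False False = 0" "Pq M (G False j k) False True = G False j k"
  "Pq M (G False j k) True False = cs (sg M j * sg M k) * G True (sig M j) (sig M k)" "Pq M (G False j k) True True = 0"
  by (simp_all add: Pq_G PL_def ent_mk)
lemma PqGT: "Pq M (G True j k) False False = 0" "Pq M (G True j k) True False = G True j k"
  "Pq M (G True j k) False True = cs (sg M j * sg M k) * G False (sig M j) (sig M k)" "Pq M (G True j k) True True = 0"
  by (simp_all add: Pq_G PL_def ent_mk)

definition EF :: "nat \<Rightarrow> mx \<Rightarrow> bool" where "EF M X \<longleftrightarrow> (\<forall>r c. ent X r c \<in> Fr M)"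

lemma EF_mone: "EF M mone"
proof -
  have "ent mone r c = (if r = c then fone else fzero)" for r c
    by (auto simp: ent_def mone_def fzero_def)
  then show ?thesis by (simp add: EF_def)
qed

lemma EF_mmul: "EF M X \<Longrightarrow> EF M Y \<Longrightarrow> EF M (mmul X Y)"
  by (simp add: EF_def ent_mmul UNIV_bool_sum fadd_def[symmetric])

lemma EF_PL: "y \<in> letters M \<Longrightarrow> EF M (PL M y)"
proof -
  assume y: "y \<in> letters M"
  obtain j k b where jkb: "y = (j,k,b)" by (cases y)
  have jk: "j \<in> idx M" "k \<in> idx M" using y by (auto simp: jkb letters_def idx_def)
  then show ?thesis
    by (auto simp: EF_def jkb PL_def ent_mk inF_def[symmetric] sig_idx)
qed

lemma EF_wd: "set v \<subseteq> letters M \<Longrightarrow> EF M (MX.wd (PL M) v)"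
  by (induction v) (simp_all add: EF_mone EF_mmul EF_PL)

lemma Pq_inF: "inF M a \<Longrightarrow> inF M (Pq M a r c)"
proof -
  assume a: "inF M a"
  have "ent (MX.ext (PL M) (un a)) r c = fsumset (supp (un a)) (\<lambda>v. fscale (un a v) (ent (MX.wd (PL M) v) r c))"
    by (simp add: MX.ext_def ent_def fsumset_def fscale_def)
  also have "\<dots> \<in> Fr M"
  proof (intro fsumset_Fr fscale_Fr)
    show "finite (supp (un a))" using a by (simp add: inF_fin)
    fix v assume "v \<in> supp (un a)"
    then have "set v \<subseteq> letters M" using a by (simp add: inF_def Fr_iff)
    then show "ent (MX.wd (PL M) v) r c \<in> Fr M" using EF_wd[unfolded EF_def] by blast
  qed
  finally show ?thesis by (simp add: inF_def Pq_def)
qed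


lemma supp_fone: "finite (supp fone)" by (simp add: supp_def fone_def)

lemma Pq_cs: "Pq M (cs k) r c = (if r = c then cs k else 0)"
proof -
  have "Pq M (cs k) r c = NC (ent (\<lambda>x. k * mone x) r c)"
    by (simp add: Pq_def cs_def MX.ext_fscale[OF supp_fone] MX.ext_fone)
  also have "\<dots> = (if r = c then cs k else 0)"
    by (auto simp: ent_def mone_def cs_def fscale_def zero_nc_def fzero_def)
  finally show ?thesis .
qed

lemma Pq_cs_mult: "inF M a \<Longrightarrow> Pq M (cs k * a) r c = cs k * Pq M a r c"
  by (cases r) (simp_all add: Pq_mult Pq_cs)

lemma Pq_dlt: "Pq M (dlt j k) r c = (if r = c then dlt j k else 0)"
  by (simp add: dlt_def Pq_1 Pq_0)

lemma sum_TT1: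
  assumes j: "j \<in> idx M" and k: "k \<in> idx M"
  shows "(\<Sum>l\<in>idx M. (cs (sg M j * sg M l) * G True (sig M j) (sig M l)) * (cs (sg M k * sg M l) * G False (sig M k) (sig M l))) - dlt j k
     = cs (sg M j * sg M k) * R1 M True False (sig M j) (sig M k)"
proof -
  have r: "(\<Sum>l\<in>idx M. G True (sig M j) (sig M l) * G False (sig M k) (sig M l)) = (\<Sum>l\<in>idx M. G True (sig M j) l * G False (sig M k) l)"
    by (rule sum.reindex_bij_betw[OF sig_bij])
  have d: "cs (sg M j * sg M k) * dlt (sig M j) (sig M k) = dlt j k"
    using j k by (auto simp: dlt_def sg_def cs_mult[symmetric] dest: arg_cong[where f="sig M"] simp: sig_sig)
  show ?thesis
    unfolding R1_def by (simp only: cs_pair cs_sgsg sum_distrib_left[symmetric] r right_diff_distrib d)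
qed

lemma sum_FF2:
  assumes j: "j \<in> idx M" and k: "k \<in> idx M"
  shows "(\<Sum>l\<in>idx M. (cs (sg M l * sg M j) * G False (sig M l) (sig M j)) * (cs (sg M l * sg M k) * G True (sig M l) (sig M k))) - dlt j k
     = cs (sg M j * sg M k) * R2 M False True (sig M j) (sig M k)"
proof -
  have r: "(\<Sum>l\<in>idx M. G False (sig M l) (sig M j) * G True (sig M l) (sig M k)) = (\<Sum>l\<in>idx M. G False l (sig M j) * G True l (sig M k))"
    by (rule sum.reindex_bij_betw[OF sig_bij])
  have d: "cs (sg M j * sg M k) * dlt (sig M j) (sig M k) = dlt j k"
    using j k by (auto simp: dlt_def sg_def cs_mult[symmetric] dest: arg_cong[where f="sig M"] simp: sig_sig)
  have cc: "cs (sg M l * sg M j) * cs (sg M l * sg M k) = cs (sg M j * sg M k)" for l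
    by (simp add: cs_mult[symmetric]) (auto simp: sg_def)
  show ?thesis
    unfolding R2_def by (simp only: cs_pair cc sum_distrib_left[symmetric] r right_diff_distrib d)
qed

lemma IU_R: "a \<in> idx M \<Longrightarrow> c \<in> idx M \<Longrightarrow>
  inI (IU M) (R1 M False True a c) \<and> inI (IU M) (R2 M True False a c) \<and>
  inI (IU M) (R1 M True False a c) \<and> inI (IU M) (R2 M False True a c)"
  by (simp add: inI_def IU_def relU_mem starIdeal.gen)

lemmas IU_simps = inI_simps[OF relU_Fr, folded IU_def] inI_sum[OF relU_Fr, folded IU_def]

lemma Pq_R1:
  assumes j: "j \<in> idx M" and k: "k \<in> idx M"
  shows "inI (IU M) (Pq M (R1 M False True j k) r c)"
proof -
  have e: "Pq M (R1 M False True j k) r c = (\<Sum>l\<in>idx M. Pq M (G False j l * G True k l) r c) - (if r = c then dlt j k else 0)" for r c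
    unfolding R1_def using j k by (simp add: Pq_diff Pq_sum Pq_dlt)
  show ?thesis
  proof (cases r; cases c)
    assume "\<not> r" "\<not> c"
    have "Pq M (R1 M False True j k) False False = R1 M False True j k"
      using j k by (simp add: e Pq_mult PqGF PqGT) (simp add: R1_def)
    then show ?thesis using \<open>\<not> r\<close> \<open>\<not> c\<close> IU_R[OF j k] by simp
  next
    assume "\<not> r" "c"
    then show ?thesis using j k by (simp add: e Pq_mult PqGF PqGT IU_simps)
  next
    assume "r" "\<not> c"
    then show ?thesis using j k by (simp add: e Pq_mult PqGF PqGT IU_simps)
  next
    assume "r" "c"
    then show ?thesis using j k IU_R[OF sig_idx[OF j] sig_idx[OF k]]
      by (simp add: e Pq_mult PqGF PqGT sig_idx sum_TT1 IU_simps)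
  qed
qed

lemma Pq_R2:
  assumes j: "j \<in> idx M" and k: "k \<in> idx M"
  shows "inI (IU M) (Pq M (R2 M True False j k) r c)"
proof -
  have e: "Pq M (R2 M True False j k) r c = (\<Sum>l\<in>idx M. Pq M (G True l j * G False l k) r c) - (if r = c then dlt j k else 0)" for r c
    unfolding R2_def using j k by (simp add: Pq_diff Pq_sum Pq_dlt)
  show ?thesis
  proof (cases r; cases c)
    assume "\<not> r" "\<not> c"
    then show ?thesis using j k IU_R[OF sig_idx[OF j] sig_idx[OF k]]
      by (simp add: e Pq_mult PqGF PqGT sig_idx sum_FF2 IU_simps)
  next
    assume "\<not> r" "c"
    then show ?thesis using j k by (simp add: e Pq_mult PqGF PqGT IU_simps)
  next
    assume "r" "\<not> c"
    then show ?thesis using j k by (simp add: e Pq_mult PqGF PqGT IU_simps)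
  next
    assume "r" "c"
    have "Pq M (R2 M True False j k) True True = R2 M True False j k"
      using j k by (simp add: e Pq_mult PqGF PqGT) (simp add: R2_def)
    then show ?thesis using \<open>r\<close> \<open>c\<close> IU_R[OF j k] by simp
  qed
qed

lemma Pq_RJ:
  assumes j: "j \<in> idx M" and k: "k \<in> idx M"
  shows "Pq M (RJ M j k) r c = 0"
proof -
  have s: "sg M (sig M j) * sg M (sig M k) = sg M j * sg M k"
    using j k by (auto simp: sg_def sig_def idx_def)
  have cc: "cs (sg M j * sg M k) * cs (sg M j * sg M k) = 1"
    by (simp add: cs_mult[symmetric]) (auto simp: sg_def)
  have e: "Pq M (RJ M j k) r c = Pq M (G False j k) r c - cs (sg M j * sg M k) * Pq M (G True (sig M j) (sig M k)) r c" for r c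
    unfolding RJ_def using j k by (simp add: Pq_diff Pq_cs_mult sig_idx)
  show ?thesis
    using j k by (cases r; cases c) (simp_all add: e PqGF PqGT sig_sig s mult.assoc[symmetric] cc)
qed

lemma Pq_IO:
  "e \<in> IO M \<Longrightarrow> inI (IU M) (Pq M (NC e) r c)"
  unfolding IO_def
proof (induction arbitrary: r c rule: starIdeal.induct)
  case (gen e)
  from relO_cases[OF gen] obtain j k where jk: "j \<in> idx M" "k \<in> idx M"
    "e = un (R1 M False True j k) \<or> e = un (R2 M True False j k) \<or> e = un (RJ M j k)"
    by blast
  from jk(3) show ?case
    by (elim disjE) (simp_all add: Pq_R1 Pq_R2 Pq_RJ jk(1,2) IU_simps)
next
  case zero then show ?case by (simp add: NC_fzero Pq_0 IU_simps)
next
  case (add a b) then show ?case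
    using I_Fr[OF relO_Fr] by (simp add: NC_fadd Pq_add inF_def IU_simps)
next
  case (scale a k)
  have "inF M (NC a)" using scale I_Fr[OF relO_Fr] by (simp add: inF_def)
  then show ?case using scale by (simp add: NC_fscale Pq_cs_mult IU_simps)
next
  case (lmul x a) then show ?case
    using I_Fr[OF relO_Fr] by (simp add: NC_fmul Pq_mult inF_def IU_simps Pq_inF[unfolded inF_def])
next
  case (rmul a x) then show ?case
    using I_Fr[OF relO_Fr] by (simp add: NC_fmul Pq_mult inF_def IU_simps Pq_inF[unfolded inF_def])
next
  case (star a)
  have a: "inF M (NC a)" using star I_Fr[OF relO_Fr] by (simp add: inF_def)
  have "NC (fstar a) = nstar (NC a)" by (simp add: nstar_def)
  then show ?case using star a by (simp add: Pq_nstar IU_simps)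
qed

lemma Pq_good:
  "p \<in> goodS M \<Longrightarrow> Pq M (NC p) False True = 0 \<and> Pq M (NC p) True False = 0 \<and> Pq M (NC p) True True = NC p"
proof (induction rule: goodS.induct)
  case one then show ?case by (simp add: NC_fone Pq_1)
next
  case (gen j k l m)
  have "NC (fmul (us j k) (u l m)) = G True j k * G False l m" by (simp add: NC_fmul NC_u NC_us)
  then show ?case using gen by (simp add: Pq_mult PqGF PqGT)
next
  case (add p q) then show ?case
    using goodS_Fr[OF add.hyps(1)] goodS_Fr[OF add.hyps(2)] by (simp add: NC_fadd Pq_add inF_def)
next
  case (scale p k) then show ?case
    using goodS_Fr[OF scale.hyps(1)] by (simp add: NC_fscale Pq_cs_mult inF_def)
next
  case (mul p q) then show ?case
    using goodS_Fr[OF mul.hyps(1)] goodS_Fr[OF mul.hyps(2)] by (simp add: NC_fmul Pq_mult inF_def)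
next
  case (star p)
  have "NC (fstar p) = nstar (NC p)" by (simp add: nstar_def)
  then show ?case using star goodS_Fr[OF star.hyps(1)] by (simp add: Pq_nstar inF_def nstar_0)
qed

lemma good_inj:
  assumes p: "p \<in> goodS M" and q: "q \<in> goodS M" and pq: "fsub p q \<in> IO M"
  shows "fsub p q \<in> IU M"
proof -
  have "inI (IU M) (Pq M (NC (fsub p q)) True True)" by (rule Pq_IO[OF pq])
  moreover have "Pq M (NC (fsub p q)) True True = NC (fsub p q)"
    using Pq_good[OF p] Pq_good[OF q] goodS_Fr[OF p] goodS_Fr[OF q]
    by (simp add: NC_fsub Pq_diff inF_def)
  ultimately show ?thesis by (simp add: inI_def)
qed


lemma tlist_Nil: "tlist [] = (\<lambda>x. 0)" by (simp add: tlist_def)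
lemma tlist_Cons: "tlist (p # ps) = tadd (ftens (fst p) (snd p)) (tlist ps)"
  by (simp add: tlist_def tadd_def)
lemma tlist_append: "tlist (ps @ qs) = tadd (tlist ps) (tlist qs)"
  by (simp add: tlist_def tadd_def)

lemma tmul_ftens_tlist: "tmul (ftens a b) (tlist qs) = tlist (map (\<lambda>cd. (fmul a (fst cd), fmul b (snd cd))) qs)"
  by (induction qs) (simp_all add: tlist_Nil tlist_Cons TD.zero_r tadd_def TD.add_r ftens_tmul)

lemma tmul_tlist: "tmul (tlist ps) (tlist qs) =
   tlist (concat (map (\<lambda>ab. map (\<lambda>cd. (fmul (fst ab) (fst cd), fmul (snd ab) (snd cd))) qs) ps))"
  by (induction ps) (simp_all add: tlist_Nil tlist_Cons TD.zero_l tadd_def TD.add_l tmul_ftens_tlist tlist_append)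

lemma tscale_tlist: "tscale c (tlist ps) = tlist (map (\<lambda>ab. (fscale c (fst ab), snd ab)) ps)"
  by (induction ps) (simp_all add: tlist_Nil tlist_Cons tscale_def tadd_def ftens_def fscale_def distrib_left mult.assoc split_beta fun_eq_iff)

lemma tstar_tlist: "tstar (tlist ps) = tlist (map (\<lambda>ab. (fstar (fst ab), fstar (snd ab))) ps)"
  by (induction ps) (simp_all add: tlist_Nil tlist_Cons TD.st_zero tadd_def TD.st_add tstar_ftens)

definition TLS :: "nat \<Rightarrow> tel set" where
  "TLS M = {t. \<exists>ps. (\<forall>i<length ps. fst (ps!i) \<in> goodS M \<and> snd (ps!i) \<in> goodS M) \<and> t = tlist ps}"

lemma TLS_iff: "t \<in> TLS M \<longleftrightarrow> (\<exists>ps. (\<forall>ab\<in>set ps. fst ab \<in> goodS M \<and> snd ab \<in> goodS M) \<and> t = tlist ps)"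
  by (simp add: TLS_def all_set_conv_all_nth)

lemma TLS_zero: "(\<lambda>x. 0) \<in> TLS M"
  unfolding TLS_iff by (rule exI[of _ "[]"]) (simp add: tlist_Nil)

lemma TLS_tens: "p \<in> goodS M \<Longrightarrow> q \<in> goodS M \<Longrightarrow> ftens p q \<in> TLS M"
  unfolding TLS_iff by (rule exI[of _ "[(p,q)]"]) (simp add: tlist_Cons tlist_Nil tadd_def)

lemma TLS_add: "s \<in> TLS M \<Longrightarrow> t \<in> TLS M \<Longrightarrow> tadd s t \<in> TLS M"
proof -
  assume "s \<in> TLS M" "t \<in> TLS M"
  then obtain ps qs where "\<forall>ab\<in>set ps. fst ab \<in> goodS M \<and> snd ab \<in> goodS M" "s = tlist ps"
    "\<forall>ab\<in>set qs. fst ab \<in> goodS M \<and> snd ab \<in> goodS M" "t = tlist qs" by (auto simp: TLS_iff)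
  then show ?thesis unfolding TLS_iff by (intro exI[of _ "ps @ qs"]) (auto simp: tlist_append)
qed

lemma TLS_scale: "s \<in> TLS M \<Longrightarrow> tscale c s \<in> TLS M"
proof -
  assume "s \<in> TLS M"
  then obtain ps where "\<forall>ab\<in>set ps. fst ab \<in> goodS M \<and> snd ab \<in> goodS M" "s = tlist ps"
    by (auto simp: TLS_iff)
  then show ?thesis unfolding TLS_iff
    by (intro exI[of _ "map (\<lambda>ab. (fscale c (fst ab), snd ab)) ps"]) (auto simp: tscale_tlist intro: goodS.scale)
qed

lemma TLS_star: "s \<in> TLS M \<Longrightarrow> tstar s \<in> TLS M"
proof -
  assume "s \<in> TLS M"
  then obtain ps where "\<forall>ab\<in>set ps. fst ab \<in> goodS M \<and> snd ab \<in> goodS M" "s = tlist ps"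
    by (auto simp: TLS_iff)
  then show ?thesis unfolding TLS_iff
    by (intro exI[of _ "map (\<lambda>ab. (fstar (fst ab), fstar (snd ab))) ps"]) (auto simp: tstar_tlist intro: goodS.star)
qed

lemma TLS_mul: "s \<in> TLS M \<Longrightarrow> t \<in> TLS M \<Longrightarrow> tmul s t \<in> TLS M"
proof -
  assume "s \<in> TLS M" "t \<in> TLS M"
  then obtain ps qs where "\<forall>ab\<in>set ps. fst ab \<in> goodS M \<and> snd ab \<in> goodS M" "s = tlist ps"
    "\<forall>ab\<in>set qs. fst ab \<in> goodS M \<and> snd ab \<in> goodS M" "t = tlist qs" by (auto simp: TLS_iff)
  then show ?thesis unfolding TLS_iff
    by (intro exI[of _ "concat (map (\<lambda>ab. map (\<lambda>cd. (fmul (fst ab) (fst cd), fmul (snd ab) (snd cd))) qs) ps)"])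
       (auto simp: tmul_tlist intro: goodS.mul)
qed

lemma TLS_sum: "finite S \<Longrightarrow> (\<And>i. i \<in> S \<Longrightarrow> F i \<in> TLS M) \<Longrightarrow> (\<lambda>x. \<Sum>i\<in>S. F i x) \<in> TLS M"
proof (induction S rule: finite_induct)
  case empty then show ?case by (simp add: TLS_zero)
next
  case (insert i S)
  have "(\<lambda>x. \<Sum>i\<in>insert i S. F i x) = tadd (F i) (\<lambda>x. \<Sum>i\<in>S. F i x)"
    using insert by (simp add: tadd_def)
  then show ?case using insert by (simp add: TLS_add)
qed

lemma ut_sum: "ut (\<Sum>i\<in>S. F i) = (\<lambda>x. \<Sum>i\<in>S. ut (F i) x)"
  by (induction S rule: infinite_finite_induct) (simp_all add: ut_0 ut_plus tadd_def)

lemma Delta_gen: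
  assumes "j \<in> idx M" "k \<in> idx M" "l \<in> idx M" "m \<in> idx M"
  shows "fDelta M (fmul (us j k) (u l m)) \<in> TLS M"
proof -
  have "Dl M (G True j k * G False l m) = (\<Sum>a\<in>idx M. \<Sum>b\<in>idx M. tens (G True j a * G False l b) (G True a k * G False b m))"
    using assms by (simp add: Dl_mult inF_def[symmetric] Dl_G sum_distrib_left sum_distrib_right tens_mult) (rule sum.swap)
  then have "ut (Dl M (G True j k * G False l m)) = ut (\<Sum>a\<in>idx M. \<Sum>b\<in>idx M. tens (G True j a * G False l b) (G True a k * G False b m))"
    by simp
  moreover have "ut (Dl M (G True j k * G False l m)) = fDelta M (fmul (us j k) (u l m))"
    by (simp add: Dl_def G_def un_times us_def u_def)
  moreover have "ut (\<Sum>a\<in>idx M. \<Sum>b\<in>idx M. tens (G True j a * G False l b) (G True a k * G False b m))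
      = (\<lambda>x. \<Sum>a\<in>idx M. \<Sum>b\<in>idx M. ftens (fmul (us j a) (u l b)) (fmul (us a k) (u b m)) x)"
    by (simp add: ut_sum tens_def G_def un_times us_def u_def)
  ultimately have "fDelta M (fmul (us j k) (u l m)) = (\<lambda>x. \<Sum>a\<in>idx M. \<Sum>b\<in>idx M. ftens (fmul (us j a) (u l b)) (fmul (us a k) (u b m)) x)"
    by simp
  also have "\<dots> \<in> TLS M"
    using assms by (intro TLS_sum TLS_tens goodS.gen) auto
  finally show ?thesis .
qed

lemma good_Delta: "p \<in> goodS M \<Longrightarrow> fDelta M p \<in> TLS M"
proof (induction rule: goodS.induct)
  case one then show ?case by (simp add: fDelta_fone TLS_tens goodS.one)
next
  case (gen j k l m) then show ?case by (rule Delta_gen)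
next
  case (add p q) then show ?case by (simp add: fDelta_fadd goodS_Fr TLS_add)
next
  case (scale p c) then show ?case by (simp add: fDelta_fscale goodS_Fr TLS_scale)
next
  case (mul p q) then show ?case by (simp add: fDelta_fmul goodS_Fr TLS_mul)
next
  case (star p) then show ?case by (simp add: fDelta_fstar goodS_Fr TLS_star)
qed

section \<open>The isomorphism\<close>

definition phi :: "nat \<Rightarrow> el set \<Rightarrow> el set" where "phi M X = (\<Union>p\<in>X. cls M (IO M) p)"

lemmas IUs = relU_Fr[of M, folded IU_def] for M
lemma A'_char: "A' M = cls M (IU M) ` goodS M"
  unfolding A'_def IU_def by (rule subalgS_char[OF relU_Fr])
lemma B'_char: "B' M = cls M (IO M) ` goodS M"
  unfolding B'_def IO_def by (rule subalgS_char[OF relO_Fr])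

lemma clsU_mem: "p \<in> Fr M \<Longrightarrow> p \<in> cls M (IU M) p"
  unfolding IU_def by (rule cls_mem[OF relU_Fr])

lemma clsO_eq: "p \<in> Fr M \<Longrightarrow> q \<in> Fr M \<Longrightarrow> cls M (IO M) p = cls M (IO M) q \<longleftrightarrow> fsub p q \<in> IO M"
  unfolding IO_def by (rule cls_eq_iff[OF relO_Fr])
lemma clsU_eq: "p \<in> Fr M \<Longrightarrow> q \<in> Fr M \<Longrightarrow> cls M (IU M) p = cls M (IU M) q \<longleftrightarrow> fsub p q \<in> IU M"
  unfolding IU_def by (rule cls_eq_iff[OF relU_Fr])

lemma phi_cls: "p \<in> Fr M \<Longrightarrow> phi M (cls M (IU M) p) = cls M (IO M) p"
proof -
  assume p: "p \<in> Fr M"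
  have "cls M (IO M) q = cls M (IO M) p" if "q \<in> cls M (IU M) p" for q
  proof -
    have q: "q \<in> Fr M" "fsub p q \<in> IU M" using that by (auto simp: cls_def)
    have "fsub q p \<in> IO M" using IU_IO q(2) starIdeal.scale[of "fsub p q" M "relO M" "-1"]
      by (auto simp: IO_def fsub_def fscale_def)
    then show ?thesis using clsO_eq[OF q(1) p] by simp
  qed
  then have "phi M (cls M (IU M) p) = (\<Union>q\<in>cls M (IU M) p. cls M (IO M) p)"
    unfolding phi_def by (rule SUP_cong[OF refl])
  then show ?thesis using clsU_mem[OF p] by auto
qed

lemma qU: 
  "p \<in> Fr M \<Longrightarrow> q \<in> Fr M \<Longrightarrow> qadd M (IU M) (cls M (IU M) p) (cls M (IU M) q) = cls M (IU M) (fadd p q)"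
  "p \<in> Fr M \<Longrightarrow> q \<in> Fr M \<Longrightarrow> qmul M (IU M) (cls M (IU M) p) (cls M (IU M) q) = cls M (IU M) (fmul p q)"
  "p \<in> Fr M \<Longrightarrow> qscale M (IU M) c (cls M (IU M) p) = cls M (IU M) (fscale c p)"
  "p \<in> Fr M \<Longrightarrow> qstar M (IU M) (cls M (IU M) p) = cls M (IU M) (fstar p)"
  unfolding IU_def
  by (rule qadd_cls[OF relU_Fr], assumption+, rule qmul_cls[OF relU_Fr], assumption+,
      rule qscale_cls[OF relU_Fr], assumption, rule qstar_cls[OF relU_Fr], assumption)

lemma qO:
  "p \<in> Fr M \<Longrightarrow> q \<in> Fr M \<Longrightarrow> qadd M (IO M) (cls M (IO M) p) (cls M (IO M) q) = cls M (IO M) (fadd p q)"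
  "p \<in> Fr M \<Longrightarrow> q \<in> Fr M \<Longrightarrow> qmul M (IO M) (cls M (IO M) p) (cls M (IO M) q) = cls M (IO M) (fmul p q)"
  "p \<in> Fr M \<Longrightarrow> qscale M (IO M) c (cls M (IO M) p) = cls M (IO M) (fscale c p)"
  "p \<in> Fr M \<Longrightarrow> qstar M (IO M) (cls M (IO M) p) = cls M (IO M) (fstar p)"
  unfolding IO_def
  by (rule qadd_cls[OF relO_Fr], assumption+, rule qmul_cls[OF relO_Fr], assumption+,
      rule qscale_cls[OF relO_Fr], assumption, rule qstar_cls[OF relO_Fr], assumption)

lemma qDelta_U: "p \<in> Fr M \<Longrightarrow> qDelta M (IU M) (cls M (IU M) p) = tcls M (IU M) (fDelta M p)"
  unfolding IU_def by (rule qDelta_cls[OF relU_Fr]) (simp_all add: Delta_relU[unfolded IU_def])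
lemma qDelta_O: "p \<in> Fr M \<Longrightarrow> qDelta M (IO M) (cls M (IO M) p) = tcls M (IO M) (fDelta M p)"
  unfolding IO_def by (rule qDelta_cls[OF relO_Fr]) (simp_all add: Delta_relO[unfolded IO_def])

lemma phi_iso: "cqg_iso M (IU M) (A' M) (IO M) (B' M) (phi M)"
  unfolding cqg_iso_def
proof (intro conjI ballI allI)
  show "bij_betw (phi M) (A' M) (B' M)"
  proof (rule bij_betwI')
    fix X Y assume "X \<in> A' M" "Y \<in> A' M"
    then obtain p q where p: "p \<in> goodS M" "X = cls M (IU M) p" and q: "q \<in> goodS M" "Y = cls M (IU M) q"
      by (auto simp: A'_char)
    show "(phi M X = phi M Y) = (X = Y)"
      using p q goodS_Fr[OF p(1)] goodS_Fr[OF q(1)] good_inj[OF p(1) q(1)] IU_IO[of M]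
      by (auto simp: phi_cls clsO_eq clsU_eq)
  next
    fix X assume "X \<in> A' M"
    then obtain p where p: "p \<in> goodS M" "X = cls M (IU M) p" by (auto simp: A'_char)
    then show "phi M X \<in> B' M" using goodS_Fr[OF p(1)] by (simp add: phi_cls B'_char)
  next
    fix Y assume "Y \<in> B' M"
    then obtain p where p: "p \<in> goodS M" "Y = cls M (IO M) p" by (auto simp: B'_char)
    show "\<exists>X\<in>A' M. Y = phi M X"
    proof (rule bexI[of _ "cls M (IU M) p"])
      show "Y = phi M (cls M (IU M) p)" using p goodS_Fr[OF p(1)] by (simp add: phi_cls)
      show "cls M (IU M) p \<in> A' M" using p by (simp add: A'_char)
    qed
  qed
  show "phi M (qone M (IU M)) = qone M (IO M)"
    by (simp add: qone_def phi_cls)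
  fix X assume X: "X \<in> A' M"
  then obtain p where p: "p \<in> goodS M" "X = cls M (IU M) p" by (auto simp: A'_char)
  have pF: "p \<in> Fr M" using goodS_Fr[OF p(1)] .
  {
    fix Y assume "Y \<in> A' M"
    then obtain q where q: "q \<in> goodS M" "Y = cls M (IU M) q" by (auto simp: A'_char)
    have qF: "q \<in> Fr M" using goodS_Fr[OF q(1)] .
    show "phi M (qadd M (IU M) X Y) = qadd M (IO M) (phi M X) (phi M Y)"
      using p q pF qF by (simp add: qU qO phi_cls)
    show "phi M (qmul M (IU M) X Y) = qmul M (IO M) (phi M X) (phi M Y)"
      using p q pF qF by (simp add: qU qO phi_cls)
  }
  fix c
  show "phi M (qscale M (IU M) c X) = qscale M (IO M) c (phi M X)"
    using p pF by (simp add: qU qO phi_cls)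
next
  fix X assume X: "X \<in> A' M"
  then obtain p where p: "p \<in> goodS M" "X = cls M (IU M) p" by (auto simp: A'_char)
  have pF: "p \<in> Fr M" using goodS_Fr[OF p(1)] .
  show "phi M (qstar M (IU M) X) = qstar M (IO M) (phi M X)"
    using p pF by (simp add: qU qO phi_cls)
next
  fix X assume X: "X \<in> A' M"
  then obtain p where p: "p \<in> goodS M" "X = cls M (IU M) p" by (auto simp: A'_char)
  have pF: "p \<in> Fr M" using goodS_Fr[OF p(1)] .
  obtain ps where ps: "\<forall>i<length ps. fst (ps!i) \<in> goodS M \<and> snd (ps!i) \<in> goodS M" "fDelta M p = tlist ps"
    using good_Delta[OF p(1)] by (auto simp: TLS_def)
  show "\<exists>ps ps' :: (el \<times> el) list. length ps' = length ps
        \<and> (\<forall>i<length ps. cls M (IU M) (fst (ps!i)) \<in> A' M \<and> cls M (IU M) (snd (ps!i)) \<in> A' M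
              \<and> cls M (IO M) (fst (ps'!i)) = phi M (cls M (IU M) (fst (ps!i)))
              \<and> cls M (IO M) (snd (ps'!i)) = phi M (cls M (IU M) (snd (ps!i))))
        \<and> qDelta M (IU M) X = tcls M (IU M) (tlist ps)
        \<and> qDelta M (IO M) (phi M X) = tcls M (IO M) (tlist ps')"
  proof (intro exI conjI)
    show "length ps = length ps" ..
    show "\<forall>i<length ps. cls M (IU M) (fst (ps!i)) \<in> A' M \<and> cls M (IU M) (snd (ps!i)) \<in> A' M
              \<and> cls M (IO M) (fst (ps!i)) = phi M (cls M (IU M) (fst (ps!i)))
              \<and> cls M (IO M) (snd (ps!i)) = phi M (cls M (IU M) (snd (ps!i)))"
      using ps(1) by (auto simp: A'_char phi_cls goodS_Fr)
    show "qDelta M (IU M) X = tcls M (IU M) (tlist ps)"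
      using p pF ps(2) by (simp add: qDelta_U)
    show "qDelta M (IO M) (phi M X) = tcls M (IO M) (tlist ps)"
      using p pF ps(2) by (simp add: qDelta_O phi_cls)
  qed
qed

lemma phi_gen: "gen_values M (phi M)"
  unfolding gen_values_def by (auto simp: phi_cls)

lemma uniq:
  assumes iso: "cqg_iso M (IU M) (A' M) (IO M) (B' M) \<psi>" and gv: "gen_values M \<psi>"
  shows "X \<in> A' M \<Longrightarrow> \<psi> X = phi M X"
  unfolding A'_def
proof (induction rule: subalgS.induct)
  case one
  then show ?case using iso phi_iso[of M] by (simp add: cqg_iso_def)
next
  case (gen j k l m)
  then show ?case using gv phi_gen[of M] by (simp add: gen_values_def)
next
  case (add X Y)
  then show ?case using iso phi_iso[of M] by (simp add: cqg_iso_def A'_def)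
next
  case (scale X c)
  then show ?case using iso phi_iso[of M] by (simp add: cqg_iso_def A'_def)
next
  case (mul X Y)
  then show ?case using iso phi_iso[of M] by (simp add: cqg_iso_def A'_def)
next
  case (star X)
  then show ?case using iso phi_iso[of M] by (simp add: cqg_iso_def A'_def)
qed

theorem mainTheorem5:
  fixes M :: nat
  assumes "M \<ge> 1"
  shows "\<exists>\<phi>. cqg_iso M (IU M) (A' M) (IO M) (B' M) \<phi> \<and> gen_values M \<phi>
            \<and> (\<forall>\<psi>. cqg_iso M (IU M) (A' M) (IO M) (B' M) \<psi> \<and> gen_values M \<psi>
                     \<longrightarrow> (\<forall>X\<in>A' M. \<psi> X = \<phi> X))"
  using phi_iso phi_gen uniq by blast


end
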